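(* Let $\Omega$, $s$, $c$ be as in the context. If $\bar\rho\in X$ satisfies condition (N), then there exists a unique $p^*\in\Sigma(\bar\rho)$ such that $p^*\le\tilde p$ on $\Omega$ for every $\tilde p\in\Sigma(\bar\rho)$; that is, $p^*$ is the smallest $c$-concave maximizer of the dual problem.
   Context: $\Omega\subset\mathbb{R}^d$ bounded smooth domain. $s:\mathbb{R}\times\Omega\to\mathbb{R}\cup\{+\infty\}$: (s1) $s(\cdot,x)$ proper, lsc, convex; (s2) $s(z,x)=+\infty$ for $z<0$, $s(0,x)=0$, $\inf s>-\infty$, $\lim_{z\to\infty}\inf_x s(z,x)/z=+\infty$. $s^*(p,x)=\sup_z(pz-s(z,x))$; $\partial s^*$ subdifferential in $p$. $E(\rho)=\int_\Omega s(\rho,x)dx$, $E^*(p)=\int_\Omega s^*(p,x)dx$, $X=\{\rho\in L^1(\Omega):E(\rho)<\infty\}$, $X^*=\{p:\Omega\to[-\infty,\infty]$ measurable$:E^*(p)<\infty\}$. Cost $c\ge0$ on $\mathbb{R}^d\times\mathbb{R}^d$, symmetric, $c(x,x)=0$, $C^1_{loc}$, $y\mapsto\nabla_xc(x_0,y)$ injective. $p^c(y)=\inf_{x\in\Omega}p(x)+c(x,y)$, $q^{\bar c}(x)=\sup_{y\in\Omega}q(y)-c(x,y)$; $c$-concave: $p^{c\bar c}=p$. $J^*(p,\bar\rho)=\int_\Omega\bar\rho\,p^cdx-E^*(p)$; $\Sigma(\bar\rho)=\operatorname{argmax}_{p\in X^*,p^{c\bar c}=p}J^*(p,\bar\rho)$.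 Condition (N): $0<\int_\Omega\bar\rho<\lim_{b\to\infty}\int_\Omega\sup\partial s^*(b,x)dx$. *)

theory Defs
  imports "HOL-Analysis.Analysis"
begin

fun Ck_on :: "nat \<Rightarrow> ('a::euclidean_space \<Rightarrow> real) \<Rightarrow> 'a set \<Rightarrow> bool" where
  "Ck_on 0 f S = continuous_on S f"
| "Ck_on (Suc k) f S =
     (\<exists>f'. (\<forall>x\<in>S. (f has_derivative f' x) (at x)) \<and> (\<forall>v. Ck_on k (\<lambda>x. f' x v) S))"

definition smooth_on :: "('a::euclidean_space \<Rightarrow> real) \<Rightarrow> 'a set \<Rightarrow> bool" where
  "smooth_on f S \<longleftrightarrow> (\<forall>k. Ck_on k f S)"

definition bounded_smooth_domain :: "'a::euclidean_space set \<Rightarrow> bool" where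
  "bounded_smooth_domain \<Omega> \<longleftrightarrow>
     open \<Omega> \<and> connected \<Omega> \<and> \<Omega> \<noteq> {} \<and> bounded \<Omega> \<and>
     (\<forall>x0\<in>frontier \<Omega>. \<exists>U \<phi>. open U \<and> x0 \<in> U \<and> smooth_on \<phi> U \<and>
        (\<forall>x\<in>U. \<exists>D. (\<phi> has_derivative D) (at x) \<and> D \<noteq> (\<lambda>h. 0)) \<and>
        \<Omega> \<inter> U = {x\<in>U. \<phi> x < 0})"

definition lsc_ereal :: "(real \<Rightarrow> ereal) \<Rightarrow> bool" where
  "lsc_ereal f \<longleftrightarrow> (\<forall>z. f z \<le> Liminf (at z) f)"

definition proper_ereal :: "(real \<Rightarrow> ereal) \<Rightarrow> bool" where
  "proper_ereal f \<longleftrightarrow> (\<forall>z. f z \<noteq> -\<infinity>) \<and> (\<exists>z. f z \<noteq> \<infinity>)"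

definition convex_ereal :: "(real \<Rightarrow> ereal) \<Rightarrow> bool" where
  "convex_ereal f \<longleftrightarrow> (\<forall>z1 z2 t. 0 \<le> t \<and> t \<le> 1 \<longrightarrow>
      f (t * z1 + (1 - t) * z2) \<le> ereal t * f z1 + ereal (1 - t) * f z2)"

text \<open>Standing assumptions (s1), (s2) on the integrand s, for x in \<Omega>.
  We also assume s is a Borel (normal) integrand so that the integrals make sense.\<close>
definition admissible_s :: "'a::euclidean_space set \<Rightarrow> (real \<Rightarrow> 'a \<Rightarrow> ereal) \<Rightarrow> bool" where
  "admissible_s \<Omega> s \<longleftrightarrow>
     (\<forall>x\<in>\<Omega>. proper_ereal (\<lambda>z. s z x) \<and> lsc_ereal (\<lambda>z. s z x) \<and> convex_ereal (\<lambda>z. s z x)) \<and>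
     (\<forall>x\<in>\<Omega>. \<forall>z<0. s z x = \<infinity>) \<and> (\<forall>x\<in>\<Omega>. s 0 x = 0) \<and>
     (\<exists>m::real. \<forall>x\<in>\<Omega>. \<forall>z. ereal m \<le> s z x) \<and>
     ((\<lambda>z. (INF x\<in>\<Omega>. s z x) / ereal z) \<longlongrightarrow> \<infinity>) at_top \<and>
     (\<lambda>(z, x). s z x) \<in> borel_measurable borel"

text \<open>Legendre transform in the first variable (sup over the effective domain; for finite p this
  is the usual sup over all z, and it also fixes the convention for p = +/- infinity).\<close>
definition sstar :: "(real \<Rightarrow> 'a \<Rightarrow> ereal) \<Rightarrow> ereal \<Rightarrow> 'a \<Rightarrow> ereal" where
  "sstar s p x = (SUP z\<in>{z. s z x \<noteq> \<infinity>}. p * ereal z - s z x)"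

definition subdiff_sstar :: "(real \<Rightarrow> 'a \<Rightarrow> ereal) \<Rightarrow> real \<Rightarrow> 'a \<Rightarrow> real set" where
  "subdiff_sstar s b x =
     {z. \<forall>q::real. sstar s (ereal b) x + ereal (z * (q - b)) \<le> sstar s (ereal q) x}"

definition eint :: "'a measure \<Rightarrow> ('a \<Rightarrow> ereal) \<Rightarrow> ereal" where
  "eint M f = enn2ereal (\<integral>\<^sup>+ x. e2ennreal (f x) \<partial>M) - enn2ereal (\<integral>\<^sup>+ x. e2ennreal (- f x) \<partial>M)"

definition Efun :: "'a::euclidean_space set \<Rightarrow> (real \<Rightarrow> 'a \<Rightarrow> ereal) \<Rightarrow> ('a \<Rightarrow> real) \<Rightarrow> ereal" where
  "Efun \<Omega> s \<rho> = eint (lebesgue_on \<Omega>) (\<lambda>x. s (\<rho> x) x)"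

definition Estar :: "'a::euclidean_space set \<Rightarrow> (real \<Rightarrow> 'a \<Rightarrow> ereal) \<Rightarrow> ('a \<Rightarrow> ereal) \<Rightarrow> ereal" where
  "Estar \<Omega> s p = eint (lebesgue_on \<Omega>) (\<lambda>x. sstar s (p x) x)"

definition Xspace :: "'a::euclidean_space set \<Rightarrow> (real \<Rightarrow> 'a \<Rightarrow> ereal) \<Rightarrow> ('a \<Rightarrow> real) set" where
  "Xspace \<Omega> s = {\<rho>. integrable (lebesgue_on \<Omega>) \<rho> \<and> Efun \<Omega> s \<rho> < \<infinity>}"

definition Xstar :: "'a::euclidean_space set \<Rightarrow> (real \<Rightarrow> 'a \<Rightarrow> ereal) \<Rightarrow> ('a \<Rightarrow> ereal) set" where
  "Xstar \<Omega> s = {p. p \<in> borel_measurable (lebesgue_on \<Omega>) \<and> Estar \<Omega> s p < \<infinity>}"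

definition grad :: "('a::euclidean_space \<Rightarrow> real) \<Rightarrow> 'a \<Rightarrow> 'a" where
  "grad f x = (SOME g. (f has_derivative (\<lambda>h. g \<bullet> h)) (at x))"

definition admissible_cost :: "('a::euclidean_space \<Rightarrow> 'a \<Rightarrow> real) \<Rightarrow> bool" where
  "admissible_cost c \<longleftrightarrow>
     (\<forall>x y. 0 \<le> c x y) \<and> (\<forall>x y. c x y = c y x) \<and> (\<forall>x. c x x = 0) \<and>
     (\<exists>c'. (\<forall>z. ((\<lambda>(x, y). c x y) has_derivative blinfun_apply (c' z)) (at z)) \<and>
           continuous_on UNIV c') \<and>
     (\<forall>x0. inj (\<lambda>y. grad (\<lambda>x. c x y) x0))"

definition ctrans :: "'a set \<Rightarrow> ('a \<Rightarrow> 'a \<Rightarrow> real) \<Rightarrow> ('a \<Rightarrow> ereal) \<Rightarrow> 'a \<Rightarrow> ereal" where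
  "ctrans \<Omega> c p y = (INF x\<in>\<Omega>. p x + ereal (c x y))"

definition cbartrans :: "'a set \<Rightarrow> ('a \<Rightarrow> 'a \<Rightarrow> real) \<Rightarrow> ('a \<Rightarrow> ereal) \<Rightarrow> 'a \<Rightarrow> ereal" where
  "cbartrans \<Omega> c q x = (SUP y\<in>\<Omega>. q y - ereal (c x y))"

definition c_concave :: "'a set \<Rightarrow> ('a \<Rightarrow> 'a \<Rightarrow> real) \<Rightarrow> ('a \<Rightarrow> ereal) \<Rightarrow> bool" where
  "c_concave \<Omega> c p \<longleftrightarrow> (\<forall>x\<in>\<Omega>. cbartrans \<Omega> c (ctrans \<Omega> c p) x = p x)"

definition Jstar :: "'a::euclidean_space set \<Rightarrow> (real \<Rightarrow> 'a \<Rightarrow> ereal) \<Rightarrow> ('a \<Rightarrow> 'a \<Rightarrow> real)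
    \<Rightarrow> ('a \<Rightarrow> ereal) \<Rightarrow> ('a \<Rightarrow> real) \<Rightarrow> ereal" where
  "Jstar \<Omega> s c p \<rho> = eint (lebesgue_on \<Omega>) (\<lambda>y. ereal (\<rho> y) * ctrans \<Omega> c p y) - Estar \<Omega> s p"

definition Sigma_max :: "'a::euclidean_space set \<Rightarrow> (real \<Rightarrow> 'a \<Rightarrow> ereal) \<Rightarrow> ('a \<Rightarrow> 'a \<Rightarrow> real)
    \<Rightarrow> ('a \<Rightarrow> real) \<Rightarrow> ('a \<Rightarrow> ereal) set" where
  "Sigma_max \<Omega> s c \<rho> =
     {p. p \<in> Xstar \<Omega> s \<and> c_concave \<Omega> c p \<and>
         (\<forall>q. q \<in> Xstar \<Omega> s \<and> c_concave \<Omega> c q \<longrightarrow> Jstar \<Omega> s c q \<rho> \<le> Jstar \<Omega> s c p \<rho>)}"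

definition condN :: "'a::euclidean_space set \<Rightarrow> (real \<Rightarrow> 'a \<Rightarrow> ereal) \<Rightarrow> ('a \<Rightarrow> real) \<Rightarrow> bool" where
  "condN \<Omega> s \<rho> \<longleftrightarrow>
     0 < integral\<^sup>L (lebesgue_on \<Omega>) \<rho> \<and>
     ereal (integral\<^sup>L (lebesgue_on \<Omega>) \<rho>) <
       Lim at_top (\<lambda>b::real. eint (lebesgue_on \<Omega>) (\<lambda>x. Sup (ereal ` subdiff_sstar s b x)))"

end

theory Submission
  imports Defs "HOL-Complex_Analysis.Great_Picard"
begin
lemma enn2ereal_fin: "x < \<infinity> \<Longrightarrow> enn2ereal x = ereal (enn2real x)"
  by (metis enn2ereal_ennreal enn2real_nonneg ennreal_enn2real infinity_ennreal_def)
  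
lemma eint_real:
  assumes "integrable M f"
  shows "eint M (\<lambda>x. ereal (f x)) = ereal (integral\<^sup>L M f)"
proof -
  have n: "(\<integral>\<^sup>+ x. ennreal (norm (f x)) \<partial>M) < \<infinity>" using assms integrable_iff_bounded by blast
  have a: "(\<integral>\<^sup>+ x. ennreal (f x) \<partial>M) < \<infinity>"
    by (rule le_less_trans[OF _ n], rule nn_integral_mono, simp)
  have b: "(\<integral>\<^sup>+ x. ennreal (- f x) \<partial>M) < \<infinity>"
    by (rule le_less_trans[OF _ n], rule nn_integral_mono, simp)
  show ?thesis
    unfolding eint_def real_lebesgue_integral_def[OF assms]
    by (simp add: enn2ereal_fin[OF a] enn2ereal_fin[OF b])
qed

lemma convex_subgrad_max:
  fixes f :: "real \<Rightarrow> real"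
  assumes cvx: "convex_on UNIV f"
  obtains d where "\<And>t. f b + d * (t - b) \<le> f t"
    "\<And>z. (\<And>t. f b + z * (t - b) \<le> f t) \<Longrightarrow> z \<le> d"
proof -
  define S where "S = (\<lambda>h. (f (b + h) - f b) / h) ` {0<..}"
  have three: "(f t - f b) / (t - b) \<le> (f (b + h) - f b) / h" if "t < b" "0 < h" for t h
  proof -
    have "(f t - f b) / (t - b) \<le> (f t - f (b+h)) / (t - (b+h))"
      using convex_on_slope_le(1)[OF cvx, of t "b+h" b] that by auto
    also have "\<dots> \<le> (f b - f (b+h)) / (b - (b+h))"
      using convex_on_slope_le(2)[OF cvx, of t "b+h" b] that by auto
    also have "\<dots> = (f (b + h) - f b) / h" using that by (simp add: field_simps)
    finally show ?thesis .
  qed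
  have bdd: "bdd_below S"
    unfolding S_def bdd_below_def
    using three[of "b - 1"] by auto
  have ne: "S \<noteq> {}" unfolding S_def by auto
  define d where "d = Inf S"
  have dle: "d \<le> (f (b + h) - f b) / h" if "0 < h" for h
    unfolding d_def by (rule cInf_lower[OF _ bdd]) (use that S_def in auto)
  show ?thesis
  proof
    fix t
    consider "t > b" | "t = b" | "t < b" by linarith
    then show "f b + d * (t - b) \<le> f t"
    proof cases
      case 1
      have "d \<le> (f (b + (t - b)) - f b) / (t - b)" using dle[of "t-b"] 1 by simp
      then have "d * (t - b) \<le> f t - f b" using 1 by (simp add: pos_le_divide_eq)
      then show ?thesis by simp
    next
      case 2 then show ?thesis by simp
    next
      case 3
      have "(f t - f b) / (t - b) \<le> d"
        unfolding d_def by (rule cInf_greatest[OF ne]) (use three 3 S_def in auto)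
      then have "f t - f b \<ge> d * (t - b)" using 3 by (simp add: neg_divide_le_eq)
      then show ?thesis by simp
    qed
  next
    fix z assume z: "\<And>t. f b + z * (t - b) \<le> f t"
    show "z \<le> d" unfolding d_def
    proof (rule cInf_greatest[OF ne])
      fix y assume "y \<in> S"
      then obtain h where h: "h > 0" "y = (f (b + h) - f b) / h" unfolding S_def by auto
      have "f b + z * h \<le> f (b + h)" using z[of "b+h"] by simp
      then show "z \<le> y" using h by (simp add: pos_le_divide_eq)
    qed
  qed
qed

section \<open>c-transforms\<close>

lemma ereal_le_plus_minus: "a \<le> b + ereal r \<Longrightarrow> a - ereal r \<le> (b::ereal)"
  by (cases a; cases b) auto

lemma ereal_minus_le_plus: "a - ereal r \<le> b \<Longrightarrow> a \<le> (b::ereal) + ereal r"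
  by (cases a; cases b) auto

lemma ctrans_le_self:
  assumes "y \<in> \<Omega>" "c y y = 0" shows "ctrans \<Omega> c p y \<le> p y"
  unfolding ctrans_def using INF_lower[OF assms(1), of "\<lambda>x. p x + ereal (c x y)"] assms by (simp add: zero_ereal_def[symmetric])

lemma ctrans_le: "x \<in> \<Omega> \<Longrightarrow> ctrans \<Omega> c p y \<le> p x + ereal (c x y)"
  unfolding ctrans_def by (rule INF_lower)

lemma cbartrans_ge: "y \<in> \<Omega> \<Longrightarrow> q y - ereal (c x y) \<le> cbartrans \<Omega> c q x"
  unfolding cbartrans_def by (rule SUP_upper)

lemma cbar_ctrans_le:
  assumes "x \<in> \<Omega>" shows "cbartrans \<Omega> c (ctrans \<Omega> c p) x \<le> p x"
  unfolding cbartrans_def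
  by (rule SUP_least, rule ereal_le_plus_minus, rule ctrans_le[OF assms])

lemma ctrans_cbar_ge:
  assumes "y \<in> \<Omega>" shows "q y \<le> ctrans \<Omega> c (cbartrans \<Omega> c q) y"
  unfolding ctrans_def
  by (rule INF_greatest, rule ereal_minus_le_plus, rule cbartrans_ge[OF assms])

lemma ctrans_mono:
  assumes "\<And>x. x \<in> \<Omega> \<Longrightarrow> p x \<le> p' x" shows "ctrans \<Omega> c p y \<le> ctrans \<Omega> c p' y"
  unfolding ctrans_def by (rule INF_mono) (use assms add_right_mono in blast)

lemma ctrans_cong:
  assumes "\<And>x. x \<in> \<Omega> \<Longrightarrow> p x = p' x" shows "ctrans \<Omega> c p y = ctrans \<Omega> c p' y"
  unfolding ctrans_def by (rule INF_cong) (simp_all add: assms)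

lemma cbartrans_cong:
  assumes "\<And>x. x \<in> \<Omega> \<Longrightarrow> p x = p' x" shows "cbartrans \<Omega> c p y = cbartrans \<Omega> c p' y"
  unfolding cbartrans_def by (rule SUP_cong) (simp_all add: assms)

lemma ctrans_triple:
  assumes "y \<in> \<Omega>"
  shows "ctrans \<Omega> c (cbartrans \<Omega> c (ctrans \<Omega> c p)) y = ctrans \<Omega> c p y"
  by (rule order_antisym[OF ctrans_mono[OF cbar_ctrans_le] ctrans_cbar_ge[OF assms]])

lemma c_concave_cc: "c_concave \<Omega> c (cbartrans \<Omega> c (ctrans \<Omega> c p))"
  unfolding c_concave_def
  by (intro ballI cbartrans_cong ctrans_triple)

lemma ctrans_min_ge:
  "min (ctrans \<Omega> c p1 y) (ctrans \<Omega> c p2 y) \<le> ctrans \<Omega> c (\<lambda>x. min (p1 x) (p2 x)) y"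
  unfolding ctrans_def
proof (rule INF_greatest)
  fix x assume x: "x \<in> \<Omega>"
  show "min (INF x\<in>\<Omega>. p1 x + ereal (c x y)) (INF x\<in>\<Omega>. p2 x + ereal (c x y)) \<le> min (p1 x) (p2 x) + ereal (c x y)"
  proof (cases "p1 x \<le> p2 x")
    case True
    then show ?thesis using INF_lower[OF x, of "\<lambda>x. p1 x + ereal (c x y)"] by (simp add: min_le_iff_disj)
  next
    case False
    then show ?thesis using INF_lower[OF x, of "\<lambda>x. p2 x + ereal (c x y)"] by (simp add: min_le_iff_disj)
  qed
qed

lemma ctrans_nonexp:
  assumes "\<And>x. x \<in> \<Omega> \<Longrightarrow> p x \<le> p' x + ereal e"
  shows "ctrans \<Omega> c p y \<le> ctrans \<Omega> c p' y + ereal e"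
proof (rule ereal_minus_le_plus)
  show "ctrans \<Omega> c p y - ereal e \<le> ctrans \<Omega> c p' y"
    unfolding ctrans_def[of _ _ p']
  proof (rule INF_greatest)
    fix x assume x: "x \<in> \<Omega>"
    have "ctrans \<Omega> c p y \<le> p x + ereal (c x y)" by (rule ctrans_le[OF x])
    also have "\<dots> \<le> p' x + ereal e + ereal (c x y)" using assms[OF x] by (rule add_right_mono)
    also have "\<dots> = p' x + ereal (c x y) + ereal e" by (simp add: ac_simps)
    finally show "ctrans \<Omega> c p y - ereal e \<le> p' x + ereal (c x y)" by (rule ereal_le_plus_minus)
  qed
qed

lemma cbartrans_nonexp:
  assumes "\<And>y. y \<in> \<Omega> \<Longrightarrow> q y \<le> q' y + ereal e"
  shows "cbartrans \<Omega> c q x \<le> cbartrans \<Omega> c q' x + ereal e"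
  unfolding cbartrans_def[of _ _ q]
proof (rule SUP_least)
  fix y assume y: "y \<in> \<Omega>"
  have "q y - ereal (c x y) \<le> (q' y + ereal e) - ereal (c x y)"
    using assms[OF y] by (rule ereal_minus_mono) simp
  also have "\<dots> = (q' y - ereal (c x y)) + ereal e" by (cases "q' y") auto
  also have "\<dots> \<le> cbartrans \<Omega> c q' x + ereal e" using cbartrans_ge[OF y] by (rule add_right_mono)
  finally show "q y - ereal (c x y) \<le> cbartrans \<Omega> c q' x + ereal e" .
qed

lemma cbartrans_modulus:
  assumes "\<And>y. y \<in> \<Omega> \<Longrightarrow> c x' y \<le> c x y + e"
  shows "cbartrans \<Omega> c q x \<le> cbartrans \<Omega> c q x' + ereal e"
  unfolding cbartrans_def[of _ _ _ x]
proof (rule SUP_least)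
  fix y assume y: "y \<in> \<Omega>"
  have "q y - ereal (c x y) \<le> (q y - ereal (c x' y)) + ereal e"
    using assms[OF y] by (cases "q y") auto
  also have "\<dots> \<le> cbartrans \<Omega> c q x' + ereal e" using cbartrans_ge[OF y] by (rule add_right_mono)
  finally show "q y - ereal (c x y) \<le> cbartrans \<Omega> c q x' + ereal e" .
qed

lemma ctrans_modulus:
  assumes "\<And>x. x \<in> \<Omega> \<Longrightarrow> c x y \<le> c x y' + e"
  shows "ctrans \<Omega> c p y \<le> ctrans \<Omega> c p y' + ereal e"
proof (rule ereal_minus_le_plus)
  show "ctrans \<Omega> c p y - ereal e \<le> ctrans \<Omega> c p y'"
    unfolding ctrans_def[of _ _ _ y']
  proof (rule INF_greatest)
    fix x assume x: "x \<in> \<Omega>"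
    have "ctrans \<Omega> c p y \<le> p x + ereal (c x y)" by (rule ctrans_le[OF x])
    also have "\<dots> \<le> p x + ereal (c x y') + ereal e" using assms[OF x] by (cases "p x") auto
    finally show "ctrans \<Omega> c p y - ereal e \<le> p x + ereal (c x y')" by (rule ereal_le_plus_minus)
  qed
qed

lemma borel_to_lebesgue_on: "f \<in> borel_measurable borel \<Longrightarrow> f \<in> borel_measurable (lebesgue_on S)"
  by (simp add: measurable_completion measurable_restrict_space1)

locale LL =
  fixes \<Omega> :: "'a::euclidean_space set"
    and s :: "real \<Rightarrow> 'a \<Rightarrow> ereal"
    and c :: "'a \<Rightarrow> 'a \<Rightarrow> real"
    and \<rho> :: "'a \<Rightarrow> real"
  assumes dom: "bounded_smooth_domain \<Omega>"
    and adm: "admissible_s \<Omega> s"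
    and cost: "admissible_cost c"
    and X: "\<rho> \<in> Xspace \<Omega> s"
    and N: "condN \<Omega> s \<rho>"
begin

abbreviation "\<mu> \<equiv> lebesgue_on \<Omega>"

lemma Om_open: "open \<Omega>" and Om_bdd: "bounded \<Omega>" and Om_ne: "\<Omega> \<noteq> {}"
  using dom unfolding bounded_smooth_domain_def by auto

lemma Om_leb: "\<Omega> \<in> sets lebesgue"
  using Om_open by (simp add: borel_open)

lemma Om_lmeas: "\<Omega> \<in> lmeasurable"
  using Om_bdd Om_leb by (rule bounded_set_imp_lmeasurable)

lemma fin_mu: "finite_measure \<mu>"
  using Om_lmeas by (rule finite_measure_lebesgue_on)

lemma space_mu[simp]: "space \<mu> = \<Omega>"
  by simp

lemma s_neg: "x \<in> \<Omega> \<Longrightarrow> z < 0 \<Longrightarrow> s z x = \<infinity>"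
  and s_zero: "x \<in> \<Omega> \<Longrightarrow> s 0 x = 0"
  and s_cvx: "x \<in> \<Omega> \<Longrightarrow> convex_ereal (\<lambda>z. s z x)"
  using adm unfolding admissible_s_def by auto

lemma s_meas: "(\<lambda>(z, x). s z x) \<in> borel_measurable borel"
  using adm unfolding admissible_s_def by auto

definition "mlb = (SOME m::real. \<forall>x\<in>\<Omega>. \<forall>z. ereal m \<le> s z x)"

lemma s_lb: "x \<in> \<Omega> \<Longrightarrow> ereal mlb \<le> s z x"
proof -
  have "\<exists>m::real. \<forall>x\<in>\<Omega>. \<forall>z. ereal m \<le> s z x" using adm unfolding admissible_s_def by auto
  from someI_ex[OF this] show "x \<in> \<Omega> \<Longrightarrow> ereal mlb \<le> s z x" unfolding mlb_def by auto
qed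

lemma s_fin:
  assumes "x \<in> \<Omega>" "s z x \<noteq> \<infinity>"
  obtains w where "s z x = ereal w" "0 \<le> z" "mlb \<le> w"
proof -
  have "s z x \<noteq> -\<infinity>" using s_lb[OF assms(1), of z] by auto
  then obtain w where w: "s z x = ereal w" using assms(2) by (cases "s z x") auto
  have "0 \<le> z" using s_neg[OF assms(1), of z] assms(2) by (cases "z < 0") auto
  moreover have "mlb \<le> w" using s_lb[OF assms(1), of z] w by simp
  ultimately show ?thesis using that w by blast
qed

lemma s_superlin:
  obtains Z where "Z > 0" "\<And>z x. Z \<le> z \<Longrightarrow> x \<in> \<Omega> \<Longrightarrow> ereal (B * z) \<le> s z x"
proof -
  have "((\<lambda>z. (INF x\<in>\<Omega>. s z x) / ereal z) \<longlongrightarrow> \<infinity>) at_top"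
    using adm unfolding admissible_s_def by auto
  then have "\<forall>\<^sub>F z in at_top. ereal B < (INF x\<in>\<Omega>. s z x) / ereal z"
    unfolding tendsto_PInfty by auto
  then obtain N where N: "\<And>z. z \<ge> N \<Longrightarrow> ereal B < (INF x\<in>\<Omega>. s z x) / ereal z"
    unfolding eventually_at_top_linorder by auto
  show ?thesis
  proof (rule that[of "max N 1"])
    fix z x assume z: "max N 1 \<le> z" and x: "x \<in> \<Omega>"
    have zp: "z > 0" using z by auto
    have lt: "ereal B < (INF x\<in>\<Omega>. s z x) / ereal z" using N z by auto
    have "ereal (B * z) \<le> (INF x\<in>\<Omega>. s z x)"
    proof (cases "INF x\<in>\<Omega>. s z x")
      case (real r)
      then have "B < r / z" using lt zp by simp
      then have "B * z < r" using zp by (simp add: pos_less_divide_eq)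
      then show ?thesis using real by simp
    next
      case PInf then show ?thesis by simp
    next
      case MInf then show ?thesis using lt zp by simp
    qed
    also have "\<dots> \<le> s z x" using x by (rule INF_lower)
    finally show "ereal (B * z) \<le> s z x" .
  qed simp
qed

definition "Sr b x = real_of_ereal (sstar s (ereal b) x)"

lemma sstar_ge0:
  assumes "x \<in> \<Omega>" shows "0 \<le> sstar s p x"
proof -
  have "0 \<in> {z. s z x \<noteq> \<infinity>}" using s_zero[OF assms] by simp
  then have "p * ereal 0 - s 0 x \<le> sstar s p x" unfolding sstar_def by (rule SUP_upper)
  then show ?thesis using s_zero[OF assms] by (simp add: zero_ereal_def[symmetric])
qed

lemma sstar_ub:
  obtains K where "0 \<le> K" "\<And>x. x \<in> \<Omega> \<Longrightarrow> sstar s (ereal b) x \<le> ereal K"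
proof -
  obtain Z where Z: "Z > 0" "\<And>z x. Z \<le> z \<Longrightarrow> x \<in> \<Omega> \<Longrightarrow> ereal ((\<bar>b\<bar> + 1) * z) \<le> s z x"
    using s_superlin by blast
  define K where "K = max 0 (\<bar>b\<bar> * Z - mlb)"
  show ?thesis
  proof (rule that[of K])
    fix x assume x: "x \<in> \<Omega>"
    show "sstar s (ereal b) x \<le> ereal K" unfolding sstar_def
    proof (rule SUP_least)
      fix z assume "z \<in> {z. s z x \<noteq> \<infinity>}"
      then obtain w where w: "s z x = ereal w" "0 \<le> z" "mlb \<le> w" using s_fin[OF x] by blast
      have "b * z - w \<le> K"
      proof (cases "Z \<le> z")
        case True
        then have "(\<bar>b\<bar> + 1) * z \<le> w" using Z(2)[OF True x] w by simp
        moreover have "b * z \<le> \<bar>b\<bar> * z" using w(2) by (simp add: mult_right_mono)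
        ultimately show ?thesis unfolding K_def using w(2) by (simp add: algebra_simps)
      next
        case False
        have "b * z \<le> \<bar>b\<bar> * z" using w(2) by (simp add: mult_right_mono)
        also have "\<dots> \<le> \<bar>b\<bar> * Z" using False by (simp add: mult_left_mono)
        finally show ?thesis unfolding K_def using w(3) by simp
      qed
      then show "ereal b * ereal z - s z x \<le> ereal K" using w by simp
    qed
  qed (simp add: K_def)
qed

lemma sstar_fin:
  assumes "x \<in> \<Omega>" shows "sstar s (ereal b) x = ereal (Sr b x)" "0 \<le> Sr b x"
proof -
  obtain K where K: "\<And>x. x \<in> \<Omega> \<Longrightarrow> sstar s (ereal b) x \<le> ereal K" using sstar_ub by blast
  have "0 \<le> sstar s (ereal b) x" using sstar_ge0[OF assms] .
  moreover have "sstar s (ereal b) x \<le> ereal K" using K[OF assms] .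
  ultimately show "sstar s (ereal b) x = ereal (Sr b x)" "0 \<le> Sr b x" unfolding Sr_def
    by (cases "sstar s (ereal b) x"; simp)+
qed

lemma Sr_bdd: obtains K where "\<And>x. x \<in> \<Omega> \<Longrightarrow> Sr b x \<le> K"
proof -
  obtain K where K: "\<And>x. x \<in> \<Omega> \<Longrightarrow> sstar s (ereal b) x \<le> ereal K" using sstar_ub by blast
  show ?thesis using that[of K] K sstar_fin by force
qed

lemma Sr_mono:
  assumes x: "x \<in> \<Omega>" and bb: "b \<le> b'" shows "Sr b x \<le> Sr b' x"
proof -
  have "sstar s (ereal b) x \<le> sstar s (ereal b') x" unfolding sstar_def
  proof (rule SUP_mono)
    fix z assume z: "z \<in> {z. s z x \<noteq> \<infinity>}"
    then obtain w where w: "s z x = ereal w" "0 \<le> z" using s_fin[OF x] by blast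
    have "b * z \<le> b' * z" using bb w(2) by (simp add: mult_right_mono)
    then show "\<exists>m\<in>{z. s z x \<noteq> \<infinity>}. ereal b * ereal z - s z x \<le> ereal b' * ereal m - s m x"
      using z w by (intro bexI[of _ z]) auto
  qed
  then show ?thesis using sstar_fin[OF x] by simp
qed

lemma Sr_cvx:
  assumes x: "x \<in> \<Omega>" shows "convex_on UNIV (\<lambda>b. Sr b x)"
  unfolding convex_on_def
proof (intro conjI ballI allI impI)
  fix b1 b2 u v :: real assume uv: "0 \<le> u" "0 \<le> v" "u + v = 1"
  have "sstar s (ereal (u *\<^sub>R b1 + v *\<^sub>R b2)) x \<le> ereal (u * Sr b1 x + v * Sr b2 x)"
    unfolding sstar_def
  proof (rule SUP_least)
    fix z assume z: "z \<in> {z. s z x \<noteq> \<infinity>}"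
    then obtain w where w: "s z x = ereal w" using s_fin[OF x] by blast
    have 1: "ereal (b1 * z - w) \<le> ereal (Sr b1 x)"
      using SUP_upper[OF z, of "\<lambda>z. ereal b1 * ereal z - s z x"] w sstar_fin[OF x, of b1]
      unfolding sstar_def by simp
    have 2: "ereal (b2 * z - w) \<le> ereal (Sr b2 x)"
      using SUP_upper[OF z, of "\<lambda>z. ereal b2 * ereal z - s z x"] w sstar_fin[OF x, of b2]
      unfolding sstar_def by simp
    have "(u * b1 + v * b2) * z - w = u * (b1 * z - w) + v * (b2 * z - w)"
      using uv by (simp add: algebra_simps) (metis add.commute distrib_left mult.commute mult_1 )
    also have "\<dots> \<le> u * Sr b1 x + v * Sr b2 x"
      using 1 2 uv by (intro add_mono mult_left_mono) auto
    finally show "ereal (u *\<^sub>R b1 + v *\<^sub>R b2) * ereal z - s z x \<le> ereal (u * Sr b1 x + v * Sr b2 x)"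
      using w by simp
  qed
  then show "Sr (u *\<^sub>R b1 + v *\<^sub>R b2) x \<le> u * Sr b1 x + v * Sr b2 x"
    using sstar_fin[OF x] by simp
qed simp

lemma s_comp_meas:
  assumes u: "u \<in> borel_measurable \<mu>" shows "(\<lambda>x. s (u x) x) \<in> borel_measurable \<mu>"
proof -
  have id: "(\<lambda>x::'a. x) \<in> borel_measurable \<mu>"
    by (rule borel_to_lebesgue_on, rule borel_measurable_continuous_onI) (rule continuous_on_id)
  have "(\<lambda>x. (u x, x)) \<in> \<mu> \<rightarrow>\<^sub>M (borel \<Otimes>\<^sub>M borel)"
    using u id by (rule measurable_Pair)
  then have p: "(\<lambda>x. (u x, x)) \<in> \<mu> \<rightarrow>\<^sub>M borel" by (simp add: borel_prod)
  have "(\<lambda>(z, x). s z x) \<circ> (\<lambda>x. (u x, x)) \<in> borel_measurable \<mu>"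
    by (rule measurable_comp[OF p s_meas])
  then show ?thesis by (simp add: o_def)
qed

lemma sstar_rat:
  assumes x: "x \<in> \<Omega>"
  shows "sstar s (ereal b) x = (SUP r\<in>(UNIV::rat set). ereal b * ereal (of_rat r) - s (of_rat r) x)"
    (is "_ = ?R")
proof (rule order_antisym)
  have R0: "0 \<le> ?R"
  proof -
    have "ereal b * ereal (of_rat 0) - s (of_rat 0) x \<le> ?R" by (rule SUP_upper) simp
    then show ?thesis using s_zero[OF x] by (simp add: zero_ereal_def[symmetric])
  qed
  show "sstar s (ereal b) x \<le> ?R" unfolding sstar_def
  proof (rule SUP_least)
    fix z assume z: "z \<in> {z. s z x \<noteq> \<infinity>}"
    then obtain w where w: "s z x = ereal w" "0 \<le> z" "mlb \<le> w" using s_fin[OF x] by blast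
    have "ereal (b * z - w) \<le> ?R"
    proof (cases "b * z - w \<le> 0")
      case True
      then have "ereal (b * z - w) \<le> 0" by (simp add: zero_ereal_def)
      then show ?thesis using R0 by (rule order_trans)
    next
      case False
      have zp: "z > 0"
      proof (rule ccontr)
        assume "\<not> z > 0" then have "z = 0" using w by auto
        then show False using False w s_zero[OF x] by simp
      qed
      define a where "a = b - w / z"
      have az: "a * z = b * z - w" unfolding a_def using zp by (simp add: field_simps)
      have "a * z > 0" using False az by simp
      then have ap: "a > 0" using zp by (simp add: zero_less_mult_iff)
      show ?thesis
      proof (rule dense_le)
        fix y assume y: "y < ereal (b * z - w)"
        show "y \<le> ?R"
        proof (cases y)
          case MInf then show ?thesis by simp
        next
          case PInf then show ?thesis using y by simp
        next
          case (real y')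
          show ?thesis
          proof (cases "y' < 0")
            case True
            then have "y \<le> 0" using real by (simp add: zero_ereal_def)
            then show ?thesis using R0 by (rule order_trans)
          next
            case False
            have "y' < a * z" using y real az by simp
            then have "y' / a < z" using ap by (simp add: divide_less_eq mult.commute)
            then obtain q where q: "q \<in> \<rat>" "y' / a < q" "q < z" using Rats_dense_in_real by blast
            have "0 \<le> y' / a" using False ap by simp
            then have qp: "q > 0" using q(2) by linarith
            define t where "t = q / z"
            have t: "0 \<le> t" "t \<le> 1" using qp q(3) zp unfolding t_def by auto
            have "s (t * z + (1 - t) * 0) x \<le> ereal t * s z x + ereal (1 - t) * s 0 x"
              by (rule s_cvx[OF x, unfolded convex_ereal_def, rule_format, of t z 0]) (use t in simp)
            then have sq: "s q x \<le> ereal (t * w)" using zp s_zero[OF x] w unfolding t_def by simp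
            have "y' < a * q" using q(2) ap by (simp add: divide_less_eq mult.commute)
            also have "a * q = b * q - t * w" unfolding a_def t_def using zp by (simp add: field_simps)
            finally have "ereal y' < ereal b * ereal q - ereal (t * w)" by simp
            also have "\<dots> \<le> ereal b * ereal q - s q x" using sq by (intro ereal_minus_mono) auto
            also have "\<dots> \<le> ?R"
            proof -
              obtain r where r: "q = of_rat r" using q(1) Rats_cases by blast
              show ?thesis unfolding r by (rule SUP_upper) simp
            qed
            finally show ?thesis using real by simp
          qed
        qed
      qed
    qed
    then show "ereal b * ereal z - s z x \<le> ?R" using w by simp
  qed
  show "?R \<le> sstar s (ereal b) x"
  proof (rule SUP_least)
    fix r :: rat
    show "ereal b * ereal (of_rat r) - s (of_rat r) x \<le> sstar s (ereal b) x"
    proof (cases "s (of_rat r) x = \<infinity>")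
      case True then show ?thesis by simp
    next
      case False
      then show ?thesis unfolding sstar_def by (intro SUP_upper) simp
    qed
  qed
qed

lemma Sr_meas:
  assumes u: "u \<in> borel_measurable \<mu>" shows "(\<lambda>x. Sr (u x) x) \<in> borel_measurable \<mu>"
proof -
  have sq: "(\<lambda>x. s q x) \<in> borel_measurable \<mu>" for q
    using s_comp_meas[of "\<lambda>_. q"] by simp
  have "(\<lambda>x. SUP r\<in>(UNIV::rat set). ereal (u x) * ereal (of_rat r) - s (of_rat r) x) \<in> borel_measurable \<mu>"
  proof (rule borel_measurable_SUP)
    fix r :: rat
    have "(\<lambda>x. ereal (u x * real_of_rat r)) \<in> borel_measurable \<mu>" using u by measurable
    then show "(\<lambda>x. ereal (u x) * ereal (of_rat r) - s (of_rat r) x) \<in> borel_measurable \<mu>"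
      by (auto intro!: borel_measurable_ereal_diff sq)
  qed simp
  then have "(\<lambda>x. real_of_ereal (SUP r\<in>(UNIV::rat set). ereal (u x) * ereal (of_rat r) - s (of_rat r) x)) \<in> borel_measurable \<mu>"
    by measurable
  then show ?thesis
    by (rule measurable_cong[THEN iffD1, rotated]) (simp add: Sr_def sstar_rat)
qed

end

context LL begin

lemma rho_int: "integrable \<mu> \<rho>" using X unfolding Xspace_def by auto

lemma rho_meas: "\<rho> \<in> borel_measurable \<mu>" using rho_int by (rule borel_measurable_integrable)

definition "R = integral\<^sup>L \<mu> \<rho>"

lemma R_pos: "R > 0" using N unfolding condN_def R_def by auto

lemma mu_fin: "emeasure \<mu> \<Omega> < \<infinity>"
  using finite_measure.emeasure_finite[OF fin_mu, of \<Omega>] by (simp add: top.not_eq_extremum)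

lemma rho_nonneg: "AE x in \<mu>. 0 \<le> \<rho> x"
proof -
  define f where "f x = s (\<rho> x) x" for x
  have E: "Efun \<Omega> s \<rho> < \<infinity>" using X unfolding Xspace_def by auto
  define P where "P = (\<integral>\<^sup>+ x. e2ennreal (f x) \<partial>\<mu>)"
  define Q where "Q = (\<integral>\<^sup>+ x. e2ennreal (- f x) \<partial>\<mu>)"
  have "Q \<le> (\<integral>\<^sup>+ x. ennreal (\<bar>mlb\<bar>) \<partial>\<mu>)"
    unfolding Q_def
  proof (rule nn_integral_mono)
    fix x assume "x \<in> space \<mu>"
    then have "ereal mlb \<le> f x" using s_lb[of x "\<rho> x"] unfolding f_def by simp
    then have "- f x \<le> ereal \<bar>mlb\<bar>" by (cases "f x") auto
    then show "e2ennreal (- f x) \<le> ennreal \<bar>mlb\<bar>" using e2ennreal_mono by fastforce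
  qed
  also have "\<dots> = ennreal \<bar>mlb\<bar> * emeasure \<mu> \<Omega>" by simp
  also have "\<dots> < \<infinity>" using mu_fin by (simp add: ennreal_mult_less_top)
  finally have Qf: "Q < \<infinity>" .
  have "P \<noteq> \<infinity>"
  proof
    assume "P = \<infinity>"
    then have "Efun \<Omega> s \<rho> = \<infinity>" using Qf unfolding Efun_def eint_def P_def[symmetric] f_def[symmetric] Q_def[symmetric]
      by (simp add: enn2ereal_fin)
    then show False using E by simp
  qed
  moreover have "(\<lambda>x. e2ennreal (f x)) \<in> borel_measurable \<mu>"
    unfolding f_def by (rule measurable_compose[OF s_comp_meas[OF rho_meas] measurable_e2ennreal])
  ultimately have "AE x in \<mu>. e2ennreal (f x) \<noteq> \<infinity>" unfolding P_def
    using nn_integral_PInf_AE by blast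
  then show ?thesis
  proof (rule AE_mp, intro AE_I2 impI)
    fix x assume x: "x \<in> space \<mu>" and "e2ennreal (f x) \<noteq> \<infinity>"
    then have "f x \<noteq> \<infinity>" by auto
    then show "0 \<le> \<rho> x" using s_neg[of x "\<rho> x"] x unfolding f_def by (cases "\<rho> x < 0") auto
  qed
qed

definition "dd b x = (SOME d. (\<forall>t. Sr b x + d * (t - b) \<le> Sr t x) \<and> (\<forall>z. (\<forall>t. Sr b x + z * (t - b) \<le> Sr t x) \<longrightarrow> z \<le> d))"

lemma dd:
  assumes x: "x \<in> \<Omega>"
  shows "Sr b x + dd b x * (t - b) \<le> Sr t x"
    and "(\<And>t. Sr b x + z * (t - b) \<le> Sr t x) \<Longrightarrow> z \<le> dd b x"
proof -
  obtain d where "\<And>t. Sr b x + d * (t - b) \<le> Sr t x" "\<And>z. (\<And>t. Sr b x + z * (t - b) \<le> Sr t x) \<Longrightarrow> z \<le> d"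
    using convex_subgrad_max[OF Sr_cvx[OF x], of b] by blast
  then have "\<exists>d. (\<forall>t. Sr b x + d * (t - b) \<le> Sr t x) \<and> (\<forall>z. (\<forall>t. Sr b x + z * (t - b) \<le> Sr t x) \<longrightarrow> z \<le> d)"
    by blast
  from someI_ex[OF this] show "Sr b x + dd b x * (t - b) \<le> Sr t x"
    and "(\<And>t. Sr b x + z * (t - b) \<le> Sr t x) \<Longrightarrow> z \<le> dd b x"
    unfolding dd_def[symmetric] by blast+
qed

lemma subdiff_eq:
  assumes x: "x \<in> \<Omega>"
  shows "subdiff_sstar s b x = {z. \<forall>t. Sr b x + z * (t - b) \<le> Sr t x}"
  unfolding subdiff_sstar_def using sstar_fin(1)[OF x] by simp

lemma G_eq:
  assumes x: "x \<in> \<Omega>"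
  shows "Sup (ereal ` subdiff_sstar s b x) = ereal (dd b x)"
proof (rule Sup_eqI)
  fix y assume "y \<in> ereal ` subdiff_sstar s b x"
  then obtain z where "y = ereal z" "\<forall>t. Sr b x + z * (t - b) \<le> Sr t x"
    unfolding subdiff_eq[OF x] by auto
  then show "y \<le> ereal (dd b x)" using dd(2)[OF x] by auto
next
  fix y assume "\<And>z. z \<in> ereal ` subdiff_sstar s b x \<Longrightarrow> z \<le> y"
  moreover have "ereal (dd b x) \<in> ereal ` subdiff_sstar s b x"
    unfolding subdiff_eq[OF x] using dd(1)[OF x] by auto
  ultimately show "ereal (dd b x) \<le> y" by blast
qed

lemma dd_nonneg:
  assumes x: "x \<in> \<Omega>" shows "0 \<le> dd b x"
proof (rule ccontr)
  assume "\<not> 0 \<le> dd b x"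
  then have d: "dd b x < 0" by simp
  define t where "t = b + 1 / dd b x"
  have "t \<le> b" using d unfolding t_def by (simp add: divide_neg_pos)
  have "Sr b x + dd b x * (t - b) \<le> Sr t x" by (rule dd(1)[OF x])
  moreover have "dd b x * (t - b) = 1" unfolding t_def using d by simp
  moreover have "Sr t x \<le> Sr b x" using Sr_mono[OF x \<open>t \<le> b\<close>] .
  ultimately show False by simp
qed

lemma dd_slope:
  assumes x: "x \<in> \<Omega>"
  shows "dd (b - 1) x \<le> Sr b x - Sr (b - 1) x" "Sr b x - Sr (b - 1) x \<le> dd b x"
  using dd(1)[OF x, of "b - 1" b] dd(1)[OF x, of b "b - 1"] by simp_all

lemma dd_mono:
  assumes x: "x \<in> \<Omega>" and bb: "b \<le> b'" shows "dd b x \<le> dd b' x"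
proof (cases "b = b'")
  case False
  then have lt: "b < b'" using bb by simp
  have 1: "Sr b x + dd b x * (b' - b) \<le> Sr b' x" by (rule dd(1)[OF x])
  have 2: "Sr b' x + dd b' x * (b - b') \<le> Sr b x" by (rule dd(1)[OF x])
  from 1 2 have "dd b x * (b' - b) \<le> dd b' x * (b' - b)" by (simp add: algebra_simps)
  then show ?thesis using lt by simp
qed simp

definition "FF b = eint \<mu> (\<lambda>x. Sup (ereal ` subdiff_sstar s b x))"

lemma FF_eq: "FF b = enn2ereal (\<integral>\<^sup>+ x. ennreal (dd b x) \<partial>\<mu>)"
proof -
  have 1: "(\<integral>\<^sup>+ x. e2ennreal (Sup (ereal ` subdiff_sstar s b x)) \<partial>\<mu>) = (\<integral>\<^sup>+ x. ennreal (dd b x) \<partial>\<mu>)"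
    by (rule nn_integral_cong) (simp add: G_eq)
  have 2: "(\<integral>\<^sup>+ x. e2ennreal (- Sup (ereal ` subdiff_sstar s b x)) \<partial>\<mu>) = (\<integral>\<^sup>+ x. 0 \<partial>\<mu>)"
    by (rule nn_integral_cong) (simp add: G_eq dd_nonneg ennreal_neg)
  show ?thesis unfolding FF_def eint_def 1 2 by (simp add: zero_ennreal.rep_eq)
qed

lemma FF_mono: assumes "b \<le> b'" shows "FF b \<le> FF b'"
proof -
  have "(\<integral>\<^sup>+ x. ennreal (dd b x) \<partial>\<mu>) \<le> (\<integral>\<^sup>+ x. ennreal (dd b' x) \<partial>\<mu>)"
    using assms by (intro nn_integral_mono ennreal_leI dd_mono) auto
  then show ?thesis unfolding FF_eq by (simp add: less_eq_ennreal.rep_eq)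
qed

lemma FF_lim: "(FF \<longlongrightarrow> (SUP b. FF b)) at_top"
proof (rule order_tendstoI)
  fix a assume "a < (SUP b. FF b)"
  then obtain b0 where b0: "a < FF b0" by (auto simp: less_SUP_iff)
  show "\<forall>\<^sub>F b in at_top. a < FF b"
    unfolding eventually_at_top_linorder
  proof (intro exI[of _ b0] allI impI)
    fix b assume "b0 \<le> b"
    then show "a < FF b" using FF_mono[of b0 b] b0 by simp
  qed
next
  fix a assume a: "(SUP b. FF b) < a"
  show "\<forall>\<^sub>F b in at_top. FF b < a"
  proof (intro always_eventually allI)
    fix b show "FF b < a" using SUP_upper[of b UNIV FF] a by simp
  qed
qed

lemma exists_b0: obtains b0 where "ereal R < FF b0"
proof -
  have L: "Lim at_top FF = (SUP b. FF b)"
    by (rule tendsto_Lim[OF _ FF_lim]) simp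
  have FFe: "FF = (\<lambda>b. eint \<mu> (\<lambda>x. Sup (ereal ` subdiff_sstar s b x)))"
    by (rule ext, rule FF_def)
  have "ereal R < Lim at_top (\<lambda>b. eint \<mu> (\<lambda>x. Sup (ereal ` subdiff_sstar s b x)))"
    using N unfolding condN_def R_def by blast
  then have "ereal R < Lim at_top FF" by (simp only: FFe)
  then have "ereal R < (SUP b. FF b)" by (simp only: L)
  then obtain b0 where "ereal R < FF b0" by (auto simp: less_SUP_iff)
  then show ?thesis by (rule that)
qed

end

lemma eint_cong:
  assumes "\<And>x. x \<in> space M \<Longrightarrow> f x = g x" shows "eint M f = eint M g"
proof -
  have "(\<integral>\<^sup>+ x. e2ennreal (f x) \<partial>M) = (\<integral>\<^sup>+ x. e2ennreal (g x) \<partial>M)"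
    by (rule nn_integral_cong) (simp add: assms)
  moreover have "(\<integral>\<^sup>+ x. e2ennreal (- f x) \<partial>M) = (\<integral>\<^sup>+ x. e2ennreal (- g x) \<partial>M)"
    by (rule nn_integral_cong) (simp add: assms)
  ultimately show ?thesis unfolding eint_def by simp
qed

context LL begin

definition "bzero = (SOME b. ereal R < FF b)"

lemma bzero: "ereal R < FF bzero"
  unfolding bzero_def by (rule someI_ex) (use exists_b0 in blast)

definition "bb = max bzero 0 + 1"

lemma bb_ge1: "1 \<le> bb" unfolding bb_def by simp

definition "w x = Sr bb x - Sr (bb - 1) x"

lemma w_props:
  assumes x: "x \<in> \<Omega>"
  shows "0 \<le> w x" "dd (bb - 1) x \<le> w x" "w x \<le> dd bb x"
  using dd_slope[OF x, of bb] dd_nonneg[OF x, of "bb - 1"] unfolding w_def by auto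

lemma w_meas: "w \<in> borel_measurable \<mu>"
  unfolding w_def[abs_def]
  using Sr_meas[of "\<lambda>_. bb"] Sr_meas[of "\<lambda>_. bb - 1"] by measurable

lemma w_bdd: obtains Kw where "\<And>x. x \<in> \<Omega> \<Longrightarrow> \<bar>w x\<bar> \<le> Kw"
proof -
  obtain K where K: "\<And>x. x \<in> \<Omega> \<Longrightarrow> Sr bb x \<le> K" using Sr_bdd by blast
  show ?thesis
  proof (rule that[of K])
    fix x assume x: "x \<in> \<Omega>"
    have "0 \<le> Sr (bb - 1) x" using sstar_fin(2)[OF x] .
    then show "\<bar>w x\<bar> \<le> K" using w_props(1)[OF x] K[OF x] unfolding w_def by simp
  qed
qed

lemma w_int: "integrable \<mu> w"
proof -
  obtain Kw where "\<And>x. x \<in> \<Omega> \<Longrightarrow> \<bar>w x\<bar> \<le> Kw" using w_bdd by blast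
  then show ?thesis
    by (intro finite_measure.integrable_const_bound[OF fin_mu _ w_meas, of Kw] AE_I2) auto
qed

definition "W = integral\<^sup>L \<mu> w"

lemma W_gt: "R < W"
proof -
  have Wn: "0 \<le> W" unfolding W_def by (rule integral_nonneg_AE) (rule AE_I2, simp add: w_props)
  have "ennreal W = (\<integral>\<^sup>+ x. ennreal (w x) \<partial>\<mu>)"
    unfolding W_def by (rule nn_integral_eq_integral[symmetric, OF w_int]) (rule AE_I2, simp add: w_props)
  also have "\<dots> \<ge> (\<integral>\<^sup>+ x. ennreal (dd (bb - 1) x) \<partial>\<mu>)"
    by (intro nn_integral_mono ennreal_leI) (simp add: w_props)
  finally have "FF (bb - 1) \<le> ereal W" unfolding FF_eq using Wn
    by (simp add: less_eq_ennreal.rep_eq)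
  moreover have "FF bzero \<le> FF (bb - 1)" by (rule FF_mono) (simp add: bb_def)
  ultimately have "ereal R < ereal W" using bzero by (meson less_le_trans)
  then show ?thesis by simp
qed

lemma w_slope:
  assumes x: "x \<in> \<Omega>" and t: "bb \<le> t"
  shows "(t - bb) * w x \<le> Sr t x"
proof -
  have "Sr bb x + dd bb x * (t - bb) \<le> Sr t x" by (rule dd(1)[OF x])
  moreover have "0 \<le> Sr bb x" using sstar_fin(2)[OF x] .
  moreover have "(t - bb) * w x \<le> dd bb x * (t - bb)"
    using mult_left_mono[OF w_props(3)[OF x], of "t - bb"] t by (simp add: mult.commute)
  ultimately show ?thesis by simp
qed

section \<open>Cost function facts\<close>

definition "KK = closure \<Omega>"

lemma KK_compact: "compact KK" unfolding KK_def using Om_bdd by (simp add: compact_closure)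

lemma Om_KK: "\<Omega> \<subseteq> KK" unfolding KK_def by (rule closure_subset)

lemma c_nonneg: "0 \<le> c x y" and c_sym: "c x y = c y x" and c_diag: "c x x = 0"
  using cost unfolding admissible_cost_def by auto

lemma c_cont: "continuous_on UNIV (\<lambda>(x, y). c x y)"
proof -
  obtain c' where "\<And>z. ((\<lambda>(x, y). c x y) has_derivative blinfun_apply (c' z)) (at z)"
    using cost unfolding admissible_cost_def by blast
  then show ?thesis by (intro has_derivative_continuous_on) auto
qed

definition "Dc = (SOME D. 0 \<le> D \<and> (\<forall>x\<in>KK. \<forall>y\<in>KK. c x y \<le> D))"

lemma Dc: "0 \<le> Dc" "x \<in> KK \<Longrightarrow> y \<in> KK \<Longrightarrow> c x y \<le> Dc"
proof -
  have "compact ((\<lambda>(x, y). c x y) ` (KK \<times> KK))"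
    by (rule compact_continuous_image) (auto intro: continuous_on_subset[OF c_cont] compact_Times KK_compact)
  then have "bounded ((\<lambda>(x, y). c x y) ` (KK \<times> KK))" by (rule compact_imp_bounded)
  then obtain B where B: "\<And>z. z \<in> (\<lambda>(x, y). c x y) ` (KK \<times> KK) \<Longrightarrow> norm z \<le> B"
    unfolding bounded_iff by blast
  have "\<exists>D. 0 \<le> D \<and> (\<forall>x\<in>KK. \<forall>y\<in>KK. c x y \<le> D)"
  proof (intro exI[of _ "max B 0"] conjI ballI)
    fix x y assume "x \<in> KK" "y \<in> KK"
    then have "norm (c x y) \<le> B" using B by force
    then show "c x y \<le> max B 0" by simp
  qed simp
  from someI_ex[OF this] show "0 \<le> Dc" "x \<in> KK \<Longrightarrow> y \<in> KK \<Longrightarrow> c x y \<le> Dc"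
    unfolding Dc_def[symmetric] by auto
qed

lemma c_uc:
  assumes e: "0 < e"
  obtains d where "0 < d" "\<And>x x' y. x \<in> KK \<Longrightarrow> x' \<in> KK \<Longrightarrow> y \<in> KK \<Longrightarrow> dist x x' < d \<Longrightarrow> \<bar>c x y - c x' y\<bar> < e"
proof -
  have "uniformly_continuous_on (KK \<times> KK) (\<lambda>(x, y). c x y)"
    by (rule compact_uniformly_continuous) (auto intro: continuous_on_subset[OF c_cont] compact_Times KK_compact)
  then obtain d where d: "0 < d" "\<And>z z'. z \<in> KK \<times> KK \<Longrightarrow> z' \<in> KK \<times> KK \<Longrightarrow> dist z' z < d \<Longrightarrow>
      dist ((\<lambda>(x, y). c x y) z') ((\<lambda>(x, y). c x y) z) < e"
    unfolding uniformly_continuous_on_def using e by metis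
  show ?thesis
  proof (rule that[OF d(1)])
    fix x x' y assume xy: "x \<in> KK" "x' \<in> KK" "y \<in> KK" "dist x x' < d"
    have "dist (x, y) (x', y) = dist x x'" by (simp add: dist_Pair_Pair)
    then have "dist ((\<lambda>(x, y). c x y) (x, y)) ((\<lambda>(x, y). c x y) (x', y)) < e"
      using d(2)[of "(x', y)" "(x, y)"] xy by auto
    then show "\<bar>c x y - c x' y\<bar> < e" by (simp add: dist_real_def)
  qed
qed

end

lemma ereal_close:
  assumes "u \<le> ereal a + ereal D" "ereal a \<le> u + ereal D"
  shows "u = ereal (real_of_ereal u)" "\<bar>real_of_ereal u - a\<bar> \<le> D"
  using assms by (cases u; simp)+

lemma ereal_close2:
  assumes "u \<le> v + ereal e" "v \<le> u + ereal e" "u = ereal a" "v = ereal b"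
  shows "\<bar>a - b\<bar> \<le> e"
  using assms by simp

context LL begin

definition "Ec p = cbartrans \<Omega> c (ctrans \<Omega> c p)"
definition "CC = {p. c_concave \<Omega> c p \<and> (\<forall>x\<in>\<Omega>. p x \<noteq> \<infinity> \<and> p x \<noteq> -\<infinity>)}"
definition "pr p x = real_of_ereal (Ec p x)"
definition "tr p y = real_of_ereal (ctrans \<Omega> c p y)"

lemma cc_eq: "p \<in> CC \<Longrightarrow> x \<in> \<Omega> \<Longrightarrow> Ec p x = p x"
  unfolding CC_def c_concave_def Ec_def by auto

lemma cc_fin0: "p \<in> CC \<Longrightarrow> x \<in> \<Omega> \<Longrightarrow> p x = ereal (pr p x)"
  using cc_eq[of p x] unfolding CC_def pr_def by (cases "p x") auto

lemma cc_bounds: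
  assumes p: "p \<in> CC" and x0: "x0 \<in> \<Omega>" and x: "x \<in> KK"
  shows "Ec p x \<le> p x0 + ereal Dc" "p x0 \<le> Ec p x + ereal Dc"
proof -
  have x0K: "x0 \<in> KK" using x0 Om_KK by auto
  have "Ec p x \<le> Ec p x0 + ereal Dc" unfolding Ec_def
  proof (rule cbartrans_modulus)
    fix y assume "y \<in> \<Omega>"
    then have "c x0 y \<le> Dc" using Dc(2)[OF x0K] Om_KK by blast
    then show "c x0 y \<le> c x y + Dc" using c_nonneg[of x y] by linarith
  qed
  then show "Ec p x \<le> p x0 + ereal Dc" using cc_eq[OF p x0] by simp
  have "Ec p x0 \<le> Ec p x + ereal Dc" unfolding Ec_def
  proof (rule cbartrans_modulus)
    fix y assume "y \<in> \<Omega>"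
    then have "c x y \<le> Dc" using Dc(2)[OF x] Om_KK by blast
    then show "c x y \<le> c x0 y + Dc" using c_nonneg[of x0 y] by linarith
  qed
  then show "p x0 \<le> Ec p x + ereal Dc" using cc_eq[OF p x0] by simp
qed

lemma ct_bounds:
  assumes p: "p \<in> CC" and x0: "x0 \<in> \<Omega>" and y: "y \<in> KK"
  shows "ctrans \<Omega> c p y \<le> p x0 + ereal Dc" "p x0 \<le> ctrans \<Omega> c p y + ereal Dc"
proof -
  have x0K: "x0 \<in> KK" using x0 Om_KK by auto
  have "ctrans \<Omega> c p y \<le> p x0 + ereal (c x0 y)" by (rule ctrans_le[OF x0])
  also have "\<dots> \<le> p x0 + ereal Dc" using Dc(2)[OF x0K y] by (intro add_left_mono) simp
  finally show "ctrans \<Omega> c p y \<le> p x0 + ereal Dc" .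
  show "p x0 \<le> ctrans \<Omega> c p y + ereal Dc"
  proof (rule ereal_minus_le_plus)
    show "p x0 - ereal Dc \<le> ctrans \<Omega> c p y" unfolding ctrans_def
    proof (rule INF_greatest)
      fix x assume xo: "x \<in> \<Omega>"
      have "p x0 \<le> Ec p x + ereal Dc" using cc_bounds(2)[OF p x0] xo Om_KK by auto
      then have "p x0 \<le> p x + ereal Dc" using cc_eq[OF p xo] by simp
      then have "p x0 - ereal Dc \<le> p x" by (rule ereal_le_plus_minus)
      also have "\<dots> \<le> p x + ereal (c x y)" using c_nonneg[of x y] by (simp add: add_increasing2)
      finally show "p x0 - ereal Dc \<le> p x + ereal (c x y)" .
    qed
  qed
qed

lemma pr_fin:
  assumes p: "p \<in> CC" and x0: "x0 \<in> \<Omega>" and x: "x \<in> KK"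
  shows "Ec p x = ereal (pr p x)" "\<bar>pr p x - pr p x0\<bar> \<le> Dc"
proof -
  have e: "p x0 = ereal (pr p x0)" by (rule cc_fin0[OF p x0])
  show "Ec p x = ereal (pr p x)" "\<bar>pr p x - pr p x0\<bar> \<le> Dc"
    using ereal_close[of "Ec p x" "pr p x0" Dc] cc_bounds[OF p x0 x] unfolding e pr_def[of p x] by auto
qed

lemma tr_fin:
  assumes p: "p \<in> CC" and x0: "x0 \<in> \<Omega>" and y: "y \<in> KK"
  shows "ctrans \<Omega> c p y = ereal (tr p y)" "\<bar>tr p y - pr p x0\<bar> \<le> Dc"
proof -
  have e: "p x0 = ereal (pr p x0)" by (rule cc_fin0[OF p x0])
  show "ctrans \<Omega> c p y = ereal (tr p y)" "\<bar>tr p y - pr p x0\<bar> \<le> Dc"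
    using ereal_close[of "ctrans \<Omega> c p y" "pr p x0" Dc] ct_bounds[OF p x0 y] unfolding e tr_def by auto
qed

lemma x0: "xo \<in> \<Omega>" if "xo = (SOME x. x \<in> \<Omega>)" using that Om_ne by (simp add: some_in_eq)

definition "xz = (SOME x. x \<in> \<Omega>)"
lemma xz: "xz \<in> \<Omega>" using x0 xz_def by blast

lemma pr_modulus:
  assumes p: "p \<in> CC" and x: "x \<in> KK" and x': "x' \<in> KK" and e: "\<And>y. y \<in> \<Omega> \<Longrightarrow> \<bar>c x y - c x' y\<bar> \<le> e"
  shows "\<bar>pr p x - pr p x'\<bar> \<le> e"
proof -
  have 1: "Ec p x \<le> Ec p x' + ereal e" unfolding Ec_def
  proof (rule cbartrans_modulus)
    fix y assume y: "y \<in> \<Omega>"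
    show "c x' y \<le> c x y + e" using e[OF y] unfolding abs_le_iff by linarith
  qed
  have 2: "Ec p x' \<le> Ec p x + ereal e" unfolding Ec_def
  proof (rule cbartrans_modulus)
    fix y assume y: "y \<in> \<Omega>"
    show "c x y \<le> c x' y + e" using e[OF y] unfolding abs_le_iff by linarith
  qed
  show ?thesis by (rule ereal_close2[OF 1 2 pr_fin(1)[OF p xz x] pr_fin(1)[OF p xz x']])
qed

lemma tr_modulus:
  assumes p: "p \<in> CC" and y: "y \<in> KK" and y': "y' \<in> KK" and e: "\<And>x. x \<in> \<Omega> \<Longrightarrow> \<bar>c x y - c x y'\<bar> \<le> e"
  shows "\<bar>tr p y - tr p y'\<bar> \<le> e"
proof -
  have 1: "ctrans \<Omega> c p y \<le> ctrans \<Omega> c p y' + ereal e"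
  proof (rule ctrans_modulus)
    fix x assume x: "x \<in> \<Omega>"
    show "c x y \<le> c x y' + e" using e[OF x] unfolding abs_le_iff by linarith
  qed
  have 2: "ctrans \<Omega> c p y' \<le> ctrans \<Omega> c p y + ereal e"
  proof (rule ctrans_modulus)
    fix x assume x: "x \<in> \<Omega>"
    show "c x y' \<le> c x y + e" using e[OF x] unfolding abs_le_iff by linarith
  qed
  show ?thesis by (rule ereal_close2[OF 1 2 tr_fin(1)[OF p xz y] tr_fin(1)[OF p xz y']])
qed

lemma c_uc2:
  assumes e: "0 < e"
  obtains d where "0 < d" "\<And>x x' y. x \<in> KK \<Longrightarrow> x' \<in> KK \<Longrightarrow> y \<in> KK \<Longrightarrow> dist x x' < d \<Longrightarrow> \<bar>c x y - c x' y\<bar> < e"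
    "\<And>x y y'. y \<in> KK \<Longrightarrow> y' \<in> KK \<Longrightarrow> x \<in> KK \<Longrightarrow> dist y y' < d \<Longrightarrow> \<bar>c x y - c x y'\<bar> < e"
proof -
  obtain d where d: "0 < d" "\<And>x x' y. x \<in> KK \<Longrightarrow> x' \<in> KK \<Longrightarrow> y \<in> KK \<Longrightarrow> dist x x' < d \<Longrightarrow> \<bar>c x y - c x' y\<bar> < e"
    using c_uc[OF e] by blast
  show ?thesis
  proof (rule that[OF d])
    fix x y y' assume "y \<in> KK" "y' \<in> KK" "x \<in> KK" "dist y y' < d"
    then have "\<bar>c y x - c y' x\<bar> < e" using d(2)[of y y' x] by blast
    moreover have "c x y = c y x" "c x y' = c y' x" by (rule c_sym)+
    ultimately show "\<bar>c x y - c x y'\<bar> < e" by simp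
  qed
qed

lemma pr_cont: assumes p: "p \<in> CC" shows "continuous_on KK (pr p)"
  unfolding continuous_on_iff
proof (intro ballI allI impI)
  fix x e assume x: "x \<in> KK" and e: "(0::real) < e"
  obtain d where d: "0 < d" "\<And>x x' y. x \<in> KK \<Longrightarrow> x' \<in> KK \<Longrightarrow> y \<in> KK \<Longrightarrow> dist x x' < d \<Longrightarrow> \<bar>c x y - c x' y\<bar> < e / 2"
    by (rule c_uc[of "e/2"]) (use e in auto)
  show "\<exists>d>0. \<forall>x'\<in>KK. dist x' x < d \<longrightarrow> dist (pr p x') (pr p x) < e"
  proof (intro exI[of _ d] conjI ballI impI)
    fix x' assume x': "x' \<in> KK" "dist x' x < d"
    have "\<bar>pr p x' - pr p x\<bar> \<le> e / 2"
    proof (rule pr_modulus[OF p x'(1) x])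
      fix y assume "y \<in> \<Omega>"
      then have "y \<in> KK" using Om_KK by blast
      then show "\<bar>c x' y - c x y\<bar> \<le> e / 2" using d(2)[OF x'(1) x _ x'(2)] by (simp add: less_imp_le)
    qed
    then show "dist (pr p x') (pr p x) < e" using e by (simp add: dist_real_def)
  qed (rule d(1))
qed

lemma tr_cont: assumes p: "p \<in> CC" shows "continuous_on KK (tr p)"
  unfolding continuous_on_iff
proof (intro ballI allI impI)
  fix y e assume y: "y \<in> KK" and e: "(0::real) < e"
  obtain d where d: "0 < d" "\<And>x x' y. x \<in> KK \<Longrightarrow> x' \<in> KK \<Longrightarrow> y \<in> KK \<Longrightarrow> dist x x' < d \<Longrightarrow> \<bar>c x y - c x' y\<bar> < e / 2"
     "\<And>x y y'. y \<in> KK \<Longrightarrow> y' \<in> KK \<Longrightarrow> x \<in> KK \<Longrightarrow> dist y y' < d \<Longrightarrow> \<bar>c x y - c x y'\<bar> < e / 2"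
    by (rule c_uc2[of "e/2"]) (use e in auto)
  show "\<exists>d>0. \<forall>y'\<in>KK. dist y' y < d \<longrightarrow> dist (tr p y') (tr p y) < e"
  proof (intro exI[of _ d] conjI ballI impI)
    fix y' assume y': "y' \<in> KK" "dist y' y < d"
    have "\<bar>tr p y' - tr p y\<bar> \<le> e / 2"
    proof (rule tr_modulus[OF p y'(1) y])
      fix x assume "x \<in> \<Omega>"
      then have "x \<in> KK" using Om_KK by blast
      then show "\<bar>c x y' - c x y\<bar> \<le> e / 2" using d(3)[OF y'(1) y _ y'(2)] by (simp add: less_imp_le)
    qed
    then show "dist (tr p y') (tr p y) < e" using e by (simp add: dist_real_def)
  qed (rule d(1))
qed

lemma pr_meas: "p \<in> CC \<Longrightarrow> pr p \<in> borel_measurable \<mu>"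
  by (rule continuous_imp_measurable_on_sets_lebesgue[OF continuous_on_subset[OF pr_cont Om_KK] Om_leb])

lemma tr_meas: "p \<in> CC \<Longrightarrow> tr p \<in> borel_measurable \<mu>"
  by (rule continuous_imp_measurable_on_sets_lebesgue[OF continuous_on_subset[OF tr_cont Om_KK] Om_leb])

lemma int_bdd:
  fixes f :: "'a \<Rightarrow> real"
  assumes "f \<in> borel_measurable \<mu>" "\<And>x. x \<in> \<Omega> \<Longrightarrow> \<bar>f x\<bar> \<le> B"
  shows "integrable \<mu> f"
proof -
  have "AE x in \<mu>. norm (f x) \<le> B" using assms(2) by (intro AE_I2) auto
  then show ?thesis using finite_measure.integrable_const_bound[OF fin_mu _ assms(1)] by blast
qed

lemma int_rho_bdd:
  fixes f :: "'a \<Rightarrow> real"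
  assumes "f \<in> borel_measurable \<mu>" "\<And>x. x \<in> \<Omega> \<Longrightarrow> \<bar>f x\<bar> \<le> B"
  shows "integrable \<mu> (\<lambda>x. \<rho> x * f x)"
proof (rule Bochner_Integration.integrable_bound)
  show "integrable \<mu> (\<lambda>x. B * \<rho> x)" using rho_int by simp
  show "(\<lambda>x. \<rho> x * f x) \<in> borel_measurable \<mu>" using rho_meas assms(1) by measurable
  show "AE x in \<mu>. norm (\<rho> x * f x) \<le> norm (B * \<rho> x)"
  proof (rule AE_I2)
    fix x assume "x \<in> space \<mu>"
    then have "\<bar>f x\<bar> \<le> B" using assms(2) by simp
    then have "\<bar>\<rho> x\<bar> * \<bar>f x\<bar> \<le> \<bar>\<rho> x\<bar> * \<bar>B\<bar>" by (simp add: mult_left_mono)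
    then show "norm (\<rho> x * f x) \<le> norm (B * \<rho> x)" by (simp add: abs_mult mult.commute)
  qed
qed

lemma pr_bdd: "p \<in> CC \<Longrightarrow> x \<in> KK \<Longrightarrow> \<bar>pr p x\<bar> \<le> \<bar>pr p xz\<bar> + Dc"
  using pr_fin(2)[of p xz x] xz by auto

lemma tr_bdd: "p \<in> CC \<Longrightarrow> y \<in> KK \<Longrightarrow> \<bar>tr p y\<bar> \<le> \<bar>pr p xz\<bar> + Dc"
  using tr_fin(2)[of p xz y] xz by auto

lemma int_tr: "p \<in> CC \<Longrightarrow> integrable \<mu> (\<lambda>y. \<rho> y * tr p y)"
  by (rule int_rho_bdd[OF tr_meas]) (use tr_bdd Om_KK in auto)

lemma Srpr_meas: "p \<in> CC \<Longrightarrow> (\<lambda>x. Sr (pr p x) x) \<in> borel_measurable \<mu>"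
  by (rule Sr_meas[OF pr_meas])

lemma Sr_bdd_le:
  obtains K where "\<And>x t. x \<in> \<Omega> \<Longrightarrow> t \<le> B \<Longrightarrow> \<bar>Sr t x\<bar> \<le> K"
proof -
  obtain K where K: "\<And>x. x \<in> \<Omega> \<Longrightarrow> Sr B x \<le> K" using Sr_bdd by blast
  show ?thesis
  proof (rule that[of K])
    fix x t assume "x \<in> \<Omega>" "t \<le> B"
    then have "Sr t x \<le> K" using K[of x] Sr_mono[of x t B] by linarith
    then show "\<bar>Sr t x\<bar> \<le> K" using sstar_fin(2)[of x t] \<open>x \<in> \<Omega>\<close> by simp
  qed
qed

lemma int_Sr: assumes p: "p \<in> CC" shows "integrable \<mu> (\<lambda>x. Sr (pr p x) x)"
proof -
  obtain K where K: "\<And>x t. x \<in> \<Omega> \<Longrightarrow> t \<le> \<bar>pr p xz\<bar> + Dc \<Longrightarrow> \<bar>Sr t x\<bar> \<le> K" using Sr_bdd_le by blast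
  show ?thesis
  proof (rule int_bdd[OF Srpr_meas[OF p]])
    fix x assume x: "x \<in> \<Omega>"
    have "pr p x \<le> \<bar>pr p xz\<bar> + Dc" using pr_bdd[OF p, of x] x Om_KK by auto
    then show "\<bar>Sr (pr p x) x\<bar> \<le> K" using K x by blast
  qed
qed

definition "J p = integral\<^sup>L \<mu> (\<lambda>y. \<rho> y * tr p y) - integral\<^sup>L \<mu> (\<lambda>x. Sr (pr p x) x)"

lemma Estar_cc: assumes p: "p \<in> CC" shows "Estar \<Omega> s p = ereal (integral\<^sup>L \<mu> (\<lambda>x. Sr (pr p x) x))"
proof -
  have "Estar \<Omega> s p = eint \<mu> (\<lambda>x. ereal (Sr (pr p x) x))"
    unfolding Estar_def by (rule eint_cong) (simp add: cc_fin0[OF p] sstar_fin(1))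
  also have "\<dots> = ereal (integral\<^sup>L \<mu> (\<lambda>x. Sr (pr p x) x))" by (rule eint_real[OF int_Sr[OF p]])
  finally show ?thesis .
qed

lemma Jstar_cc: assumes p: "p \<in> CC" shows "Jstar \<Omega> s c p \<rho> = ereal (J p)"
proof -
  have "eint \<mu> (\<lambda>y. ereal (\<rho> y) * ctrans \<Omega> c p y) = eint \<mu> (\<lambda>y. ereal (\<rho> y * tr p y))"
    by (rule eint_cong) (use tr_fin(1)[OF p xz] Om_KK in auto)
  also have "\<dots> = ereal (integral\<^sup>L \<mu> (\<lambda>y. \<rho> y * tr p y))" by (rule eint_real[OF int_tr[OF p]])
  finally show ?thesis unfolding Jstar_def Estar_cc[OF p] J_def by simp
qed

lemma cc_Xstar: assumes p: "p \<in> CC" shows "p \<in> Xstar \<Omega> s"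
proof -
  have "(\<lambda>x. ereal (pr p x)) \<in> borel_measurable \<mu>" using pr_meas[OF p] by measurable
  then have "p \<in> borel_measurable \<mu>"
    by (rule measurable_cong[THEN iffD1, rotated]) (simp add: cc_fin0[OF p])
  then show ?thesis unfolding Xstar_def using Estar_cc[OF p] by simp
qed

end

context LL begin

lemma J_le1:
  assumes p: "p \<in> CC" and x0: "x0 \<in> \<Omega>"
  shows "J p \<le> (pr p x0 + Dc) * R"
proof -
  have "integral\<^sup>L \<mu> (\<lambda>y. \<rho> y * tr p y) \<le> integral\<^sup>L \<mu> (\<lambda>y. \<rho> y * (pr p x0 + Dc))"
  proof (rule integral_mono_AE[OF int_tr[OF p]])
    show "integrable \<mu> (\<lambda>y. \<rho> y * (pr p x0 + Dc))" using rho_int by simp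
    show "AE y in \<mu>. \<rho> y * tr p y \<le> \<rho> y * (pr p x0 + Dc)"
      using rho_nonneg
    proof (rule AE_mp, intro AE_I2 impI)
      fix y assume y: "y \<in> space \<mu>" and r: "0 \<le> \<rho> y"
      have "tr p y \<le> pr p x0 + Dc" using tr_fin(2)[OF p x0, of y] y Om_KK by auto
      then show "\<rho> y * tr p y \<le> \<rho> y * (pr p x0 + Dc)" using r by (rule mult_left_mono)
    qed
  qed
  also have "\<dots> = (pr p x0 + Dc) * R" unfolding R_def by (simp add: integral_mult_left_zero mult.commute)
  finally have 1: "integral\<^sup>L \<mu> (\<lambda>y. \<rho> y * tr p y) \<le> (pr p x0 + Dc) * R" .
  have 2: "0 \<le> integral\<^sup>L \<mu> (\<lambda>x. Sr (pr p x) x)"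
    by (rule integral_nonneg_AE, rule AE_I2) (simp add: sstar_fin(2))
  show ?thesis unfolding J_def using 1 2 by simp
qed

lemma J_le2:
  assumes p: "p \<in> CC" and x0: "x0 \<in> \<Omega>" and t: "bb \<le> pr p x0 - Dc"
  shows "J p \<le> (pr p x0 + Dc) * R - (pr p x0 - Dc - bb) * W"
proof -
  have 1: "integral\<^sup>L \<mu> (\<lambda>y. \<rho> y * tr p y) \<le> (pr p x0 + Dc) * R"
  proof -
    have "J p + integral\<^sup>L \<mu> (\<lambda>x. Sr (pr p x) x) = integral\<^sup>L \<mu> (\<lambda>y. \<rho> y * tr p y)"
      unfolding J_def by simp
    have "integral\<^sup>L \<mu> (\<lambda>y. \<rho> y * tr p y) \<le> integral\<^sup>L \<mu> (\<lambda>y. \<rho> y * (pr p x0 + Dc))"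
    proof (rule integral_mono_AE[OF int_tr[OF p]])
      show "integrable \<mu> (\<lambda>y. \<rho> y * (pr p x0 + Dc))" using rho_int by simp
      show "AE y in \<mu>. \<rho> y * tr p y \<le> \<rho> y * (pr p x0 + Dc)"
        using rho_nonneg
      proof (rule AE_mp, intro AE_I2 impI)
        fix y assume y: "y \<in> space \<mu>" and r: "0 \<le> \<rho> y"
        have "tr p y \<le> pr p x0 + Dc" using tr_fin(2)[OF p x0, of y] y Om_KK by auto
        then show "\<rho> y * tr p y \<le> \<rho> y * (pr p x0 + Dc)" using r by (rule mult_left_mono)
      qed
    qed
    also have "\<dots> = (pr p x0 + Dc) * R" unfolding R_def by (simp add: integral_mult_left_zero mult.commute)
    finally show ?thesis .
  qed
  have 2: "(pr p x0 - Dc - bb) * W \<le> integral\<^sup>L \<mu> (\<lambda>x. Sr (pr p x) x)"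
  proof -
    have "integral\<^sup>L \<mu> (\<lambda>x. (pr p x0 - Dc - bb) * w x) \<le> integral\<^sup>L \<mu> (\<lambda>x. Sr (pr p x) x)"
    proof (rule integral_mono)
      show "integrable \<mu> (\<lambda>x. (pr p x0 - Dc - bb) * w x)" using w_int by simp
      show "integrable \<mu> (\<lambda>x. Sr (pr p x) x)" by (rule int_Sr[OF p])
      fix x assume x: "x \<in> space \<mu>"
      then have xo: "x \<in> \<Omega>" by simp
      have "pr p x0 - Dc \<le> pr p x" using pr_fin(2)[OF p x0, of x] xo Om_KK by auto
      then have "Sr (pr p x0 - Dc) x \<le> Sr (pr p x) x" by (rule Sr_mono[OF xo])
      moreover have "(pr p x0 - Dc - bb) * w x \<le> Sr (pr p x0 - Dc) x"
        using w_slope[OF xo t] by simp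
      ultimately show "(pr p x0 - Dc - bb) * w x \<le> Sr (pr p x) x" by simp
    qed
    then show ?thesis unfolding W_def by simp
  qed
  show ?thesis unfolding J_def using 1 2 by simp
qed

lemma J_bound: assumes p: "p \<in> CC" shows "J p \<le> (bb + 2 * Dc) * R"
proof (cases "bb \<le> pr p xz - Dc")
  case True
  have "J p \<le> (pr p xz + Dc) * R - (pr p xz - Dc - bb) * W" by (rule J_le2[OF p xz True])
  also have "\<dots> = pr p xz * (R - W) + Dc * R + (Dc + bb) * W" by (simp add: algebra_simps)
  also have "\<dots> \<le> (bb + Dc) * (R - W) + Dc * R + (Dc + bb) * W"
    using True W_gt by (intro add_right_mono mult_right_mono_neg) auto
  also have "\<dots> = (bb + 2 * Dc) * R" by (simp add: algebra_simps)
  finally show ?thesis .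
next
  case False
  have "J p \<le> (pr p xz + Dc) * R" by (rule J_le1[OF p xz])
  also have "\<dots> \<le> (bb + 2 * Dc) * R" using False R_pos by (intro mult_right_mono) auto
  finally show ?thesis .
qed

definition "Tb L = \<bar>L / R - Dc\<bar> + \<bar>max (bb + Dc) ((Dc * R + (Dc + bb) * W - L) / (W - R))\<bar> + Dc"

lemma J_coerc:
  assumes p: "p \<in> CC" and L: "L \<le> J p" and x: "x \<in> KK"
  shows "\<bar>pr p x\<bar> \<le> Tb L"
proof -
  define t where "t = pr p xz"
  have lo: "L / R - Dc \<le> t"
  proof -
    have "L \<le> (t + Dc) * R" using J_le1[OF p xz] L unfolding t_def by simp
    then have "L / R \<le> t + Dc" using R_pos by (simp add: divide_le_eq)
    then show ?thesis by simp
  qed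
  have hi: "t \<le> max (bb + Dc) ((Dc * R + (Dc + bb) * W - L) / (W - R))"
  proof (cases "bb \<le> t - Dc")
    case True
    have "L \<le> (t + Dc) * R - (t - Dc - bb) * W" using J_le2[OF p xz] True L unfolding t_def by fastforce
    then have "t * (W - R) \<le> Dc * R + (Dc + bb) * W - L" by (simp add: algebra_simps)
    then have "t \<le> (Dc * R + (Dc + bb) * W - L) / (W - R)" using W_gt by (simp add: le_divide_eq)
    then show ?thesis by simp
  next
    case False then show ?thesis by simp
  qed
  have "\<bar>t\<bar> \<le> \<bar>L / R - Dc\<bar> + \<bar>max (bb + Dc) ((Dc * R + (Dc + bb) * W - L) / (W - R))\<bar>"
    using lo hi by linarith
  moreover have "\<bar>pr p x - t\<bar> \<le> Dc" using pr_fin(2)[OF p xz x] unfolding t_def .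
  ultimately show ?thesis unfolding Tb_def by linarith
qed

lemma posmeas:
  fixes f :: "'a \<Rightarrow> real"
  assumes f: "integrable \<mu> f" and nn: "AE x in \<mu>. 0 \<le> f x" and pos: "0 < integral\<^sup>L \<mu> f"
  shows "{x \<in> \<Omega>. 0 < f x} \<in> sets \<mu>" "0 < emeasure \<mu> {x \<in> \<Omega>. 0 < f x}"
proof -
  have fm: "f \<in> borel_measurable \<mu>" using f by (rule borel_measurable_integrable)
  have "{x \<in> space \<mu>. 0 < f x} \<in> sets \<mu>" using fm by measurable
  then show A: "{x \<in> \<Omega>. 0 < f x} \<in> sets \<mu>" by simp
  show "0 < emeasure \<mu> {x \<in> \<Omega>. 0 < f x}"
  proof (rule ccontr)
    assume "\<not> 0 < emeasure \<mu> {x \<in> \<Omega>. 0 < f x}"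
    then have z: "emeasure \<mu> {x \<in> \<Omega>. 0 < f x} = 0" by (simp add: zero_less_iff_neq_zero)
    have "AE x in \<mu>. \<not> 0 < f x"
      by (rule AE_iff_measurable[OF A, THEN iffD2]) (auto simp: z)
    then have "AE x in \<mu>. f x = 0" using nn by eventually_elim simp
    then have "integral\<^sup>L \<mu> f = 0" by (rule integral_eq_zero_AE)
    then show False using pos by simp
  qed
qed

lemma rho_posmeas: "0 < emeasure \<mu> {x \<in> \<Omega>. 0 < \<rho> x}" "{x \<in> \<Omega>. 0 < \<rho> x} \<in> sets \<mu>"
  using posmeas[OF rho_int rho_nonneg] R_pos unfolding R_def by auto

lemma w_posmeas: "0 < emeasure \<mu> {x \<in> \<Omega>. 0 < w x}" "{x \<in> \<Omega>. 0 < w x} \<in> sets \<mu>"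
proof -
  have "0 < W" using W_gt R_pos by simp
  moreover have "AE x in \<mu>. 0 \<le> w x" by (rule AE_I2) (simp add: w_props)
  ultimately show "0 < emeasure \<mu> {x \<in> \<Omega>. 0 < w x}" "{x \<in> \<Omega>. 0 < w x} \<in> sets \<mu>"
    using posmeas[OF w_int] unfolding W_def by blast+
qed

lemma cconc_osc:
  assumes q: "c_concave \<Omega> c q" and x: "x \<in> \<Omega>" and x0: "x0 \<in> \<Omega>"
  shows "q x \<le> q x0 + ereal Dc"
proof -
  have x0K: "x0 \<in> KK" using x0 Om_KK by auto
  have "cbartrans \<Omega> c (ctrans \<Omega> c q) x \<le> cbartrans \<Omega> c (ctrans \<Omega> c q) x0 + ereal Dc"
  proof (rule cbartrans_modulus)
    fix y assume "y \<in> \<Omega>"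
    then have "c x0 y \<le> Dc" using Dc(2)[OF x0K] Om_KK by blast
    then show "c x0 y \<le> c x y + Dc" using c_nonneg[of x y] by linarith
  qed
  then show ?thesis using q x x0 unfolding c_concave_def by simp
qed

lemma tri:
  assumes q: "c_concave \<Omega> c q"
  shows "(\<forall>x\<in>\<Omega>. q x = \<infinity>) \<or> (\<forall>x\<in>\<Omega>. q x = -\<infinity>) \<or> q \<in> CC"
proof (cases "\<exists>x0\<in>\<Omega>. q x0 \<noteq> \<infinity> \<and> q x0 \<noteq> -\<infinity>")
  case True
  then obtain x0 where x0: "x0 \<in> \<Omega>" "q x0 \<noteq> \<infinity>" "q x0 \<noteq> -\<infinity>" by blast
  have "\<forall>x\<in>\<Omega>. q x \<noteq> \<infinity> \<and> q x \<noteq> -\<infinity>"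
  proof
    fix x assume x: "x \<in> \<Omega>"
    have 1: "q x \<le> q x0 + ereal Dc" by (rule cconc_osc[OF q x x0(1)])
    have 2: "q x0 \<le> q x + ereal Dc" by (rule cconc_osc[OF q x0(1) x])
    show "q x \<noteq> \<infinity> \<and> q x \<noteq> -\<infinity>" using 1 2 x0 by (cases "q x"; cases "q x0") auto
  qed
  then show ?thesis using q unfolding CC_def by auto
next
  case False
  show ?thesis
  proof (cases "\<exists>x1\<in>\<Omega>. q x1 = -\<infinity>")
    case True
    then obtain x1 where x1: "x1 \<in> \<Omega>" "q x1 = -\<infinity>" by blast
    have "\<forall>x\<in>\<Omega>. q x = -\<infinity>" using cconc_osc[OF q _ x1(1)] x1(2) by auto
    then show ?thesis by blast
  next
    case False2: False
    then show ?thesis using False by auto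
  qed
qed

lemma Estar_nonneg: "0 \<le> Estar \<Omega> s p"
proof -
  have "(\<integral>\<^sup>+ x. e2ennreal (- sstar s (p x) x) \<partial>\<mu>) = (\<integral>\<^sup>+ x. 0 \<partial>\<mu>)"
    by (rule nn_integral_cong) (simp add: e2ennreal_neg sstar_ge0)
  then show ?thesis unfolding Estar_def eint_def by (simp add: zero_ennreal.rep_eq)
qed

lemma Jstar_minf:
  assumes q: "\<forall>x\<in>\<Omega>. q x = -\<infinity>"
  shows "Jstar \<Omega> s c q \<rho> = -\<infinity>"
proof -
  have ct: "ctrans \<Omega> c q y = -\<infinity>" for y
    using ctrans_le[OF xz, of c q y] q xz by simp
  define A where "A = {x \<in> \<Omega>. 0 < \<rho> x}"
  have P: "(\<integral>\<^sup>+ y. e2ennreal (ereal (\<rho> y) * ctrans \<Omega> c q y) \<partial>\<mu>) = (\<integral>\<^sup>+ y. 0 \<partial>\<mu>)"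
    using rho_nonneg
  proof (intro nn_integral_cong_AE, elim AE_mp, intro AE_I2 impI)
    fix y assume "0 \<le> \<rho> y"
    then show "e2ennreal (ereal (\<rho> y) * ctrans \<Omega> c q y) = 0"
      unfolding ct by (intro e2ennreal_neg) (auto simp: less_le)
  qed
  have "(\<integral>\<^sup>+ y. top * indicator A y \<partial>\<mu>) \<le> (\<integral>\<^sup>+ y. e2ennreal (- (ereal (\<rho> y) * ctrans \<Omega> c q y)) \<partial>\<mu>)"
  proof (rule nn_integral_mono)
    fix y assume "y \<in> space \<mu>"
    show "top * indicator A y \<le> e2ennreal (- (ereal (\<rho> y) * ctrans \<Omega> c q y))"
      unfolding ct A_def by (auto simp: indicator_def e2ennreal_infty)
  qed
  moreover have "(\<integral>\<^sup>+ y. top * indicator A y \<partial>\<mu>) = top"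
    using nn_integral_cmult_indicator[OF rho_posmeas(2), of top] rho_posmeas(1) unfolding A_def
    by (simp add: ennreal_top_mult)
  ultimately have Q: "(\<integral>\<^sup>+ y. e2ennreal (- (ereal (\<rho> y) * ctrans \<Omega> c q y)) \<partial>\<mu>) = top"
    by (simp add: top_unique)
  have "eint \<mu> (\<lambda>y. ereal (\<rho> y) * ctrans \<Omega> c q y) = -\<infinity>"
    unfolding eint_def P Q by (simp add: zero_ennreal.rep_eq top_ennreal.rep_eq)
  then show ?thesis unfolding Jstar_def using Estar_nonneg[of q]
    by (cases "Estar \<Omega> s q") auto
qed

lemma sstar_inf:
  assumes x: "x \<in> \<Omega>" and wx: "0 < w x"
  shows "sstar s \<infinity> x = \<infinity>"
proof -
  have "(bb + 1 - bb) * w x \<le> Sr (bb + 1) x" by (rule w_slope[OF x]) simp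
  then have "0 < Sr (bb + 1) x" using wx by simp
  then have "0 < sstar s (ereal (bb + 1)) x" using sstar_fin(1)[OF x] by simp
  then obtain z where z: "z \<in> {z. s z x \<noteq> \<infinity>}" "0 < ereal (bb + 1) * ereal z - s z x"
    unfolding sstar_def less_SUP_iff by blast
  then obtain v where v: "s z x = ereal v" "0 \<le> z" using s_fin[OF x] by blast
  have "z \<noteq> 0" using z(2) s_zero[OF x] by auto
  then have "0 < z" using v by simp
  then have "\<infinity> * ereal z - s z x = \<infinity>" using v by simp
  moreover have "\<infinity> * ereal z - s z x \<le> sstar s \<infinity> x" unfolding sstar_def using z(1) by (rule SUP_upper)
  ultimately show ?thesis by (simp add: top_unique)
qed

lemma pinf_not_Xstar:
  assumes q: "\<forall>x\<in>\<Omega>. q x = \<infinity>"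
  shows "q \<notin> Xstar \<Omega> s"
proof -
  define A where "A = {x \<in> \<Omega>. 0 < w x}"
  have "(\<integral>\<^sup>+ y. top * indicator A y \<partial>\<mu>) \<le> (\<integral>\<^sup>+ x. e2ennreal (sstar s (q x) x) \<partial>\<mu>)"
  proof (rule nn_integral_mono)
    fix y assume "y \<in> space \<mu>"
    then show "top * indicator A y \<le> e2ennreal (sstar s (q y) y)"
      unfolding A_def using q sstar_inf by (auto simp: indicator_def e2ennreal_infty)
  qed
  moreover have "(\<integral>\<^sup>+ y. top * indicator A y \<partial>\<mu>) = top"
    using nn_integral_cmult_indicator[OF w_posmeas(2), of top] w_posmeas(1) unfolding A_def
    by (simp add: ennreal_top_mult)
  ultimately have P: "(\<integral>\<^sup>+ x. e2ennreal (sstar s (q x) x) \<partial>\<mu>) = top" by (simp add: top_unique)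
  have "(\<integral>\<^sup>+ x. e2ennreal (- sstar s (q x) x) \<partial>\<mu>) = (\<integral>\<^sup>+ x. 0 \<partial>\<mu>)"
    by (rule nn_integral_cong) (simp add: e2ennreal_neg sstar_ge0)
  then have "Estar \<Omega> s q = \<infinity>" unfolding Estar_def eint_def P
    by (simp add: zero_ennreal.rep_eq top_ennreal.rep_eq)
  then show ?thesis unfolding Xstar_def by simp
qed

end

context LL begin

lemma lat:
  assumes p1: "p1 \<in> CC" and p2: "p2 \<in> CC"
  defines "q1 \<equiv> Ec (\<lambda>x. min (p1 x) (p2 x))" and "q2 \<equiv> Ec (\<lambda>x. max (p1 x) (p2 x))"
  shows "q1 \<in> CC" "q2 \<in> CC" "J p1 + J p2 \<le> J q1 + J q2"
    "\<And>x. x \<in> \<Omega> \<Longrightarrow> pr q1 x \<le> pr p1 x" "\<And>x. x \<in> \<Omega> \<Longrightarrow> pr q1 x \<le> pr p2 x"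
proof -
  define m where "m = (\<lambda>x. min (p1 x) (p2 x))"
  define M where "M = (\<lambda>x. max (p1 x) (p2 x))"
  have q1m: "q1 = Ec m" unfolding q1_def m_def ..
  have q2M: "q2 = Ec M" unfolding q2_def M_def ..
  have tf1: "y \<in> \<Omega> \<Longrightarrow> ctrans \<Omega> c p1 y = ereal (tr p1 y)" for y using tr_fin(1)[OF p1 xz, of y] Om_KK by auto
  have tf2: "y \<in> \<Omega> \<Longrightarrow> ctrans \<Omega> c p2 y = ereal (tr p2 y)" for y using tr_fin(1)[OF p2 xz, of y] Om_KK by auto
  have low: "ctrans \<Omega> c f x \<le> Ec f x" if "x \<in> \<Omega>" for f x
    using cbartrans_ge[OF that, of "ctrans \<Omega> c f" c x] c_diag[of x] unfolding Ec_def by (simp add: zero_ereal_def[symmetric])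
  show q1: "q1 \<in> CC" unfolding CC_def
  proof (intro CollectI conjI ballI)
    show "c_concave \<Omega> c q1" unfolding q1m Ec_def by (rule c_concave_cc)
    fix x assume x: "x \<in> \<Omega>"
    have "q1 x \<le> m x" unfolding q1m Ec_def by (rule cbar_ctrans_le[OF x])
    also have "\<dots> \<le> p1 x" unfolding m_def by simp
    finally show "q1 x \<noteq> \<infinity>" using cc_fin0[OF p1 x] by auto
    have "min (ctrans \<Omega> c p1 x) (ctrans \<Omega> c p2 x) \<le> ctrans \<Omega> c m x"
      unfolding m_def by (rule ctrans_min_ge)
    also have "\<dots> \<le> q1 x" unfolding q1m by (rule low[OF x])
    finally show "q1 x \<noteq> -\<infinity>" using tf1[OF x] tf2[OF x] by (auto simp: min_def split: if_splits)
  qed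
  show q2: "q2 \<in> CC" unfolding CC_def
  proof (intro CollectI conjI ballI)
    show "c_concave \<Omega> c q2" unfolding q2M Ec_def by (rule c_concave_cc)
    fix x assume x: "x \<in> \<Omega>"
    have "q2 x \<le> M x" unfolding q2M Ec_def by (rule cbar_ctrans_le[OF x])
    moreover have "M x \<le> ereal (max (pr p1 x) (pr p2 x))"
      unfolding M_def cc_fin0[OF p1 x] cc_fin0[OF p2 x] by (cases "pr p1 x \<le> pr p2 x") (simp_all add: max_def)
    ultimately have "q2 x \<le> ereal (max (pr p1 x) (pr p2 x))" by (rule order_trans)
    moreover have "\<And>u v. u \<le> ereal v \<Longrightarrow> u \<noteq> \<infinity>" by auto
    ultimately show "q2 x \<noteq> \<infinity>" by blast
    have "ctrans \<Omega> c p1 x \<le> ctrans \<Omega> c M x" unfolding M_def by (rule ctrans_mono) simp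
    also have "\<dots> \<le> q2 x" unfolding q2M by (rule low[OF x])
    finally show "q2 x \<noteq> -\<infinity>" using tf1[OF x] by auto
  qed
  have q1le: "pr q1 x \<le> min (pr p1 x) (pr p2 x)" if x: "x \<in> \<Omega>" for x
  proof -
    have "q1 x \<le> m x" unfolding q1m Ec_def by (rule cbar_ctrans_le[OF x])
    then show ?thesis unfolding m_def using cc_fin0[OF p1 x] cc_fin0[OF p2 x] cc_fin0[OF q1 x] by simp
  qed
  then show "\<And>x. x \<in> \<Omega> \<Longrightarrow> pr q1 x \<le> pr p1 x" "\<And>x. x \<in> \<Omega> \<Longrightarrow> pr q1 x \<le> pr p2 x" by auto
  have q2le: "pr q2 x \<le> max (pr p1 x) (pr p2 x)" if x: "x \<in> \<Omega>" for x
  proof -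
    have "q2 x \<le> M x" unfolding q2M Ec_def by (rule cbar_ctrans_le[OF x])
    then show ?thesis unfolding M_def using cc_fin0[OF p1 x] cc_fin0[OF p2 x] cc_fin0[OF q2 x]
      by (cases "pr p1 x \<le> pr p2 x") (simp_all add: max_def)
  qed
  have tq1: "min (tr p1 y) (tr p2 y) \<le> tr q1 y" if y: "y \<in> \<Omega>" for y
  proof -
    have "ctrans \<Omega> c q1 y = ctrans \<Omega> c m y" unfolding q1m Ec_def by (rule ctrans_triple[OF y])
    moreover have "min (ctrans \<Omega> c p1 y) (ctrans \<Omega> c p2 y) \<le> ctrans \<Omega> c m y"
      unfolding m_def by (rule ctrans_min_ge)
    moreover have "ctrans \<Omega> c q1 y = ereal (tr q1 y)" using tr_fin(1)[OF q1 xz, of y] y Om_KK by auto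
    ultimately have "min (ereal (tr p1 y)) (ereal (tr p2 y)) \<le> ereal (tr q1 y)" using tf1[OF y] tf2[OF y] by simp
    then show ?thesis by (cases "tr p1 y \<le> tr p2 y") (simp_all add: min_def)
  qed
  have tq2: "max (tr p1 y) (tr p2 y) \<le> tr q2 y" if y: "y \<in> \<Omega>" for y
  proof -
    have e: "ctrans \<Omega> c q2 y = ctrans \<Omega> c M y" unfolding q2M Ec_def by (rule ctrans_triple[OF y])
    have "ctrans \<Omega> c p1 y \<le> ctrans \<Omega> c M y" unfolding M_def by (rule ctrans_mono) simp
    moreover have "ctrans \<Omega> c p2 y \<le> ctrans \<Omega> c M y" unfolding M_def by (rule ctrans_mono) simp
    moreover have "ctrans \<Omega> c q2 y = ereal (tr q2 y)" using tr_fin(1)[OF q2 xz, of y] y Om_KK by auto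
    ultimately have "ereal (tr p1 y) \<le> ereal (tr q2 y)" "ereal (tr p2 y) \<le> ereal (tr q2 y)" using tf1[OF y] tf2[OF y] e by simp_all
    then show ?thesis by simp
  qed
  have A: "integral\<^sup>L \<mu> (\<lambda>y. \<rho> y * tr p1 y) + integral\<^sup>L \<mu> (\<lambda>y. \<rho> y * tr p2 y)
      \<le> integral\<^sup>L \<mu> (\<lambda>y. \<rho> y * tr q1 y) + integral\<^sup>L \<mu> (\<lambda>y. \<rho> y * tr q2 y)"
  proof -
    have "integral\<^sup>L \<mu> (\<lambda>y. \<rho> y * tr p1 y + \<rho> y * tr p2 y) \<le> integral\<^sup>L \<mu> (\<lambda>y. \<rho> y * tr q1 y + \<rho> y * tr q2 y)"
    proof (rule integral_mono_AE)
      show "integrable \<mu> (\<lambda>y. \<rho> y * tr p1 y + \<rho> y * tr p2 y)" using int_tr[OF p1] int_tr[OF p2] by simp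
      show "integrable \<mu> (\<lambda>y. \<rho> y * tr q1 y + \<rho> y * tr q2 y)" using int_tr[OF q1] int_tr[OF q2] by simp
      show "AE y in \<mu>. \<rho> y * tr p1 y + \<rho> y * tr p2 y \<le> \<rho> y * tr q1 y + \<rho> y * tr q2 y"
        using rho_nonneg
      proof (rule AE_mp, intro AE_I2 impI)
        fix y assume y: "y \<in> space \<mu>" and r: "0 \<le> \<rho> y"
        have "tr p1 y + tr p2 y \<le> tr q1 y + tr q2 y" using tq1[of y] tq2[of y] y
          by (cases "tr p1 y \<le> tr p2 y") (simp_all add: min_def)
        then have "\<rho> y * (tr p1 y + tr p2 y) \<le> \<rho> y * (tr q1 y + tr q2 y)" using r by (rule mult_left_mono)
        then show "\<rho> y * tr p1 y + \<rho> y * tr p2 y \<le> \<rho> y * tr q1 y + \<rho> y * tr q2 y" by (simp add: distrib_left)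
      qed
    qed
    then show ?thesis using int_tr[OF p1] int_tr[OF p2] int_tr[OF q1] int_tr[OF q2] by simp
  qed
  have B: "integral\<^sup>L \<mu> (\<lambda>x. Sr (pr q1 x) x) + integral\<^sup>L \<mu> (\<lambda>x. Sr (pr q2 x) x)
      \<le> integral\<^sup>L \<mu> (\<lambda>x. Sr (pr p1 x) x) + integral\<^sup>L \<mu> (\<lambda>x. Sr (pr p2 x) x)"
  proof -
    have "integral\<^sup>L \<mu> (\<lambda>x. Sr (pr q1 x) x + Sr (pr q2 x) x) \<le> integral\<^sup>L \<mu> (\<lambda>x. Sr (pr p1 x) x + Sr (pr p2 x) x)"
    proof (rule integral_mono)
      show "integrable \<mu> (\<lambda>x. Sr (pr q1 x) x + Sr (pr q2 x) x)" using int_Sr[OF q1] int_Sr[OF q2] by simp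
      show "integrable \<mu> (\<lambda>x. Sr (pr p1 x) x + Sr (pr p2 x) x)" using int_Sr[OF p1] int_Sr[OF p2] by simp
      fix x assume "x \<in> space \<mu>"
      then have x: "x \<in> \<Omega>" by simp
      have 1: "Sr (pr q1 x) x \<le> Sr (min (pr p1 x) (pr p2 x)) x" by (rule Sr_mono[OF x q1le[OF x]])
      have 2: "Sr (pr q2 x) x \<le> Sr (max (pr p1 x) (pr p2 x)) x" by (rule Sr_mono[OF x q2le[OF x]])
      have 3: "Sr (min (pr p1 x) (pr p2 x)) x + Sr (max (pr p1 x) (pr p2 x)) x = Sr (pr p1 x) x + Sr (pr p2 x) x"
        by (cases "pr p1 x \<le> pr p2 x") (auto simp: min_def max_def)
      show "Sr (pr q1 x) x + Sr (pr q2 x) x \<le> Sr (pr p1 x) x + Sr (pr p2 x) x" using 1 2 3 by linarith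
    qed
    then show ?thesis using int_Sr[OF p1] int_Sr[OF p2] int_Sr[OF q1] int_Sr[OF q2] by simp
  qed
  show "J p1 + J p2 \<le> J q1 + J q2" unfolding J_def using A B by linarith
qed

end

context LL begin

lemma comp:
  fixes ps :: "nat \<Rightarrow> 'a \<Rightarrow> ereal"
  assumes ps: "\<And>n. ps n \<in> CC" and bd: "\<And>n x. x \<in> KK \<Longrightarrow> \<bar>pr (ps n) x\<bar> \<le> B"
  obtains r p where "strict_mono r" "p \<in> CC" "(\<lambda>n. J (ps (r n))) \<longlonglongrightarrow> J p"
    "(\<lambda>n. integral\<^sup>L \<mu> (pr (ps (r n)))) \<longlonglongrightarrow> integral\<^sup>L \<mu> (pr p)"
proof -
  define F where "F n x = pr (ps n) x" for n x
  have eq: "\<exists>d>0. \<forall>n y. y \<in> KK \<and> norm (x - y) < d \<longrightarrow> norm (F n x - F n y) < e"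
    if x: "x \<in> KK" and e: "0 < e" for x e
  proof -
    obtain d where d: "0 < d" "\<And>x x' y. x \<in> KK \<Longrightarrow> x' \<in> KK \<Longrightarrow> y \<in> KK \<Longrightarrow> dist x x' < d \<Longrightarrow> \<bar>c x y - c x' y\<bar> < e / 2"
      by (rule c_uc[of "e/2"]) (use e in auto)
    show ?thesis
    proof (intro exI[of _ d] conjI allI impI)
      fix n y assume y: "y \<in> KK \<and> norm (x - y) < d"
      have "\<bar>pr (ps n) x - pr (ps n) y\<bar> \<le> e / 2"
      proof (rule pr_modulus[OF ps x])
        show "y \<in> KK" using y by simp
        fix z assume "z \<in> \<Omega>"
        then have "z \<in> KK" using Om_KK by blast
        then show "\<bar>c x z - c y z\<bar> \<le> e / 2" using d(2)[of x y z] x y by (simp add: dist_norm less_imp_le)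
      qed
      then show "norm (F n x - F n y) < e" unfolding F_def using e by simp
    qed (rule d(1))
  qed
  have "\<exists>g r. continuous_on KK g \<and> strict_mono (r :: nat \<Rightarrow> nat) \<and>
      (\<forall>e>0. \<exists>N. \<forall>n x. N \<le> n \<and> x \<in> KK \<longrightarrow> norm (F (r n) x - g x) < e)"
  proof (rule Arzela_Ascoli[OF KK_compact, of F B])
    fix n x assume "x \<in> KK" then show "norm (F n x) \<le> B" using bd unfolding F_def by simp
  next
    fix x e assume "x \<in> KK" "(0::real) < e"
    then show "\<exists>d>0. \<forall>n y. y \<in> KK \<and> norm (x - y) < d \<longrightarrow> norm (F n x - F n y) < e" by (rule eq)
  next
    fix g k assume "continuous_on KK g" "strict_mono (k :: nat \<Rightarrow> nat)"
      "\<And>e. 0 < e \<Longrightarrow> \<exists>N. \<forall>n x. N \<le> n \<and> x \<in> KK \<longrightarrow> norm (F (k n) x - g x) < e"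
    then show "\<exists>g r. continuous_on KK g \<and> strict_mono (r :: nat \<Rightarrow> nat) \<and>
      (\<forall>e>0. \<exists>N. \<forall>n x. N \<le> n \<and> x \<in> KK \<longrightarrow> norm (F (r n) x - g x) < e)" by blast
  qed
  then obtain g r where g: "continuous_on KK g" "strict_mono (r :: nat \<Rightarrow> nat)"
    "\<And>e. 0 < e \<Longrightarrow> \<exists>N. \<forall>n x. N \<le> n \<and> x \<in> KK \<longrightarrow> norm (F (r n) x - g x) < e"
    by blast
  define p where "p x = ereal (g x)" for x
  define q where "q n = ps (r n)" for n
  have qc: "q n \<in> CC" for n unfolding q_def by (rule ps)
  have unif: "\<exists>N. \<forall>n\<ge>N. \<forall>x\<in>KK. \<bar>pr (q n) x - g x\<bar> < e" if "0 < e" for e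
    using g(3)[OF that] unfolding q_def F_def by auto
  have close: "\<exists>N. \<forall>n\<ge>N. \<forall>x\<in>\<Omega>. q n x \<le> p x + ereal e \<and> p x \<le> q n x + ereal e" if e: "0 < e" for e
  proof -
    obtain N where N: "\<And>n x. n \<ge> N \<Longrightarrow> x \<in> KK \<Longrightarrow> \<bar>pr (q n) x - g x\<bar> < e" using unif[OF e] by blast
    show ?thesis
    proof (intro exI[of _ N] allI impI ballI)
      fix n x assume n: "N \<le> n" and x: "x \<in> \<Omega>"
      have "\<bar>pr (q n) x - g x\<bar> < e" using N[OF n] x Om_KK by blast
      then show "q n x \<le> p x + ereal e \<and> p x \<le> q n x + ereal e"
        unfolding p_def cc_fin0[OF qc x] by (simp add: abs_less_iff)
    qed
  qed
  have Ecq: "Ec p x \<le> q n x + ereal e" if x: "x \<in> \<Omega>" and cl: "\<forall>x\<in>\<Omega>. p x \<le> q n x + ereal e" for x n e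
  proof -
    have "ctrans \<Omega> c p y \<le> ctrans \<Omega> c (q n) y + ereal e" for y
      by (rule ctrans_nonexp) (use cl in auto)
    then have "Ec p x \<le> Ec (q n) x + ereal e" unfolding Ec_def by (intro cbartrans_nonexp)
    then show ?thesis using cc_eq[OF qc x] by simp
  qed
  have qEc: "q n x \<le> Ec p x + ereal e" if x: "x \<in> \<Omega>" and cl: "\<forall>x\<in>\<Omega>. q n x \<le> p x + ereal e" for x n e
  proof -
    have "ctrans \<Omega> c (q n) y \<le> ctrans \<Omega> c p y + ereal e" for y
      by (rule ctrans_nonexp) (use cl in auto)
    then have "Ec (q n) x \<le> Ec p x + ereal e" unfolding Ec_def by (intro cbartrans_nonexp)
    then show ?thesis using cc_eq[OF qc x] by simp
  qed
  have conc: "Ec p x = p x" if x: "x \<in> \<Omega>" for x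
  proof (rule order_antisym)
    show "Ec p x \<le> p x"
    proof (rule ereal_le_epsilon2)
      fix e :: real assume e: "0 < e"
      obtain N where N: "\<forall>x\<in>\<Omega>. q N x \<le> p x + ereal (e/2) \<and> p x \<le> q N x + ereal (e/2)"
        using close[of "e/2"] e by auto
      have "Ec p x \<le> q N x + ereal (e/2)" using Ecq[OF x] N by blast
      also have "\<dots> \<le> p x + ereal (e/2) + ereal (e/2)" using N x by (intro add_right_mono) blast
      also have "\<dots> = p x + ereal e" unfolding p_def by simp
      finally show "Ec p x \<le> p x + ereal e" .
    qed
    show "p x \<le> Ec p x"
    proof (rule ereal_le_epsilon2)
      fix e :: real assume e: "0 < e"
      obtain N where N: "\<forall>x\<in>\<Omega>. q N x \<le> p x + ereal (e/2) \<and> p x \<le> q N x + ereal (e/2)"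
        using close[of "e/2"] e by auto
      have "p x \<le> q N x + ereal (e/2)" using N x by blast
      also have "\<dots> \<le> Ec p x + ereal (e/2) + ereal (e/2)" using qEc[OF x] N by (intro add_right_mono) blast
      also have "\<dots> = Ec p x + ereal e" by (simp add: add.assoc)
      finally show "p x \<le> Ec p x + ereal e" .
    qed
  qed
  have pc: "p \<in> CC" unfolding CC_def c_concave_def using conc unfolding Ec_def p_def by auto
  have prp: "pr p x = g x" if "x \<in> \<Omega>" for x unfolding pr_def using conc[OF that] p_def by simp
  have P1: "(\<lambda>n. pr (q n) x) \<longlonglongrightarrow> pr p x" if x: "x \<in> \<Omega>" for x
  proof (rule LIMSEQ_I)
    fix e :: real assume "0 < e"
    then obtain N where "\<forall>n\<ge>N. \<forall>x\<in>KK. \<bar>pr (q n) x - g x\<bar> < e" using unif by blast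
    then show "\<exists>no. \<forall>n\<ge>no. norm (pr (q n) x - pr p x) < e" using x Om_KK prp[OF x] by auto
  qed
  have P2: "(\<lambda>n. tr (q n) y) \<longlonglongrightarrow> tr p y" if y: "y \<in> \<Omega>" for y
  proof (rule LIMSEQ_I)
    fix e :: real assume e: "0 < e"
    obtain N where N: "\<forall>n\<ge>N. \<forall>x\<in>\<Omega>. q n x \<le> p x + ereal (e/2) \<and> p x \<le> q n x + ereal (e/2)"
      using close[of "e/2"] e by auto
    have yK: "y \<in> KK" using y Om_KK by blast
    show "\<exists>no. \<forall>n\<ge>no. norm (tr (q n) y - tr p y) < e"
    proof (intro exI[of _ N] allI impI)
      fix n assume n: "N \<le> n"
      have 1: "ctrans \<Omega> c (q n) y \<le> ctrans \<Omega> c p y + ereal (e/2)"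
        by (rule ctrans_nonexp) (use N n in blast)
      have 2: "ctrans \<Omega> c p y \<le> ctrans \<Omega> c (q n) y + ereal (e/2)"
        by (rule ctrans_nonexp) (use N n in blast)
      have "\<bar>tr (q n) y - tr p y\<bar> \<le> e / 2"
        by (rule ereal_close2[OF 1 2 tr_fin(1)[OF qc xz yK] tr_fin(1)[OF pc xz yK]])
      then show "norm (tr (q n) y - tr p y) < e" using e by simp
    qed
  qed
  have P3: "(\<lambda>n. Sr (pr (q n) x) x) \<longlonglongrightarrow> Sr (pr p x) x" if x: "x \<in> \<Omega>" for x
  proof -
    have "continuous_on UNIV (\<lambda>b. Sr b x)" by (rule convex_on_continuous[OF open_UNIV Sr_cvx[OF x]])
    then have "isCont (\<lambda>b. Sr b x) (pr p x)" by (simp add: continuous_on_eq_continuous_at)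
    then show ?thesis by (rule isCont_tendsto_compose[OF _ P1[OF x]])
  qed
  obtain K where K: "\<And>x t. x \<in> \<Omega> \<Longrightarrow> t \<le> B \<Longrightarrow> \<bar>Sr t x\<bar> \<le> K" using Sr_bdd_le by blast
  have bdq: "\<bar>pr (q n) x\<bar> \<le> B" if "x \<in> KK" for n x unfolding q_def using bd that .
  have I1: "(\<lambda>n. integral\<^sup>L \<mu> (\<lambda>y. \<rho> y * tr (q n) y)) \<longlonglongrightarrow> integral\<^sup>L \<mu> (\<lambda>y. \<rho> y * tr p y)"
  proof (rule integral_dominated_convergence[where w="\<lambda>y. \<bar>\<rho> y\<bar> * (B + Dc)"])
    show "(\<lambda>y. \<rho> y * tr p y) \<in> borel_measurable \<mu>" using rho_meas tr_meas[OF pc] by measurable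
    show "(\<lambda>y. \<rho> y * tr (q n) y) \<in> borel_measurable \<mu>" for n using rho_meas tr_meas[OF qc] by measurable
    show "integrable \<mu> (\<lambda>y. \<bar>\<rho> y\<bar> * (B + Dc))" using rho_int by (intro integrable_mult_left integrable_abs)
    show "AE y in \<mu>. (\<lambda>n. \<rho> y * tr (q n) y) \<longlonglongrightarrow> \<rho> y * tr p y"
      by (rule AE_I2) (auto intro!: tendsto_mult P2)
    show "AE y in \<mu>. norm (\<rho> y * tr (q n) y) \<le> \<bar>\<rho> y\<bar> * (B + Dc)" for n
    proof (rule AE_I2)
      fix y assume "y \<in> space \<mu>"
      then have yK: "y \<in> KK" using Om_KK by auto
      have "\<bar>tr (q n) y\<bar> \<le> B + Dc" using tr_bdd[OF qc yK, of n] bdq[of xz n] xz Om_KK by force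
      then show "norm (\<rho> y * tr (q n) y) \<le> \<bar>\<rho> y\<bar> * (B + Dc)" by (simp add: abs_mult mult_left_mono)
    qed
  qed
  have I2: "(\<lambda>n. integral\<^sup>L \<mu> (\<lambda>x. Sr (pr (q n) x) x)) \<longlonglongrightarrow> integral\<^sup>L \<mu> (\<lambda>x. Sr (pr p x) x)"
  proof (rule integral_dominated_convergence[where w="\<lambda>_. K"])
    show "(\<lambda>x. Sr (pr p x) x) \<in> borel_measurable \<mu>" by (rule Srpr_meas[OF pc])
    show "(\<lambda>x. Sr (pr (q n) x) x) \<in> borel_measurable \<mu>" for n by (rule Srpr_meas[OF qc])
    show "integrable \<mu> (\<lambda>_. K)" by (rule int_bdd) auto
    show "AE x in \<mu>. (\<lambda>n. Sr (pr (q n) x) x) \<longlonglongrightarrow> Sr (pr p x) x" by (rule AE_I2) (auto intro: P3)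
    show "AE x in \<mu>. norm (Sr (pr (q n) x) x) \<le> K" for n
    proof (rule AE_I2)
      fix x assume "x \<in> space \<mu>"
      then have x: "x \<in> \<Omega>" by simp
      have "pr (q n) x \<le> B" using bdq[of x n] x Om_KK by force
      then show "norm (Sr (pr (q n) x) x) \<le> K" using K[OF x] by simp
    qed
  qed
  have I3: "(\<lambda>n. integral\<^sup>L \<mu> (pr (q n))) \<longlonglongrightarrow> integral\<^sup>L \<mu> (pr p)"
  proof (rule integral_dominated_convergence[where w="\<lambda>_. B"])
    show "pr p \<in> borel_measurable \<mu>" by (rule pr_meas[OF pc])
    show "pr (q n) \<in> borel_measurable \<mu>" for n by (rule pr_meas[OF qc])
    show "integrable \<mu> (\<lambda>_. B)" by (rule int_bdd) auto
    show "AE x in \<mu>. (\<lambda>n. pr (q n) x) \<longlonglongrightarrow> pr p x" by (rule AE_I2) (auto intro: P1)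
    show "AE x in \<mu>. norm (pr (q n) x) \<le> B" for n
      by (rule AE_I2) (use bdq Om_KK in force)
  qed
  show ?thesis
  proof (rule that[OF g(2) pc])
    show "(\<lambda>n. J (ps (r n))) \<longlonglongrightarrow> J p" unfolding J_def using tendsto_diff[OF I1 I2] unfolding q_def .
    show "(\<lambda>n. integral\<^sup>L \<mu> (pr (ps (r n)))) \<longlonglongrightarrow> integral\<^sup>L \<mu> (pr p)" using I3 unfolding q_def .
  qed
qed

end

lemma ball_pos_leb:
  fixes c :: "'a::euclidean_space"
  assumes r: "0 < r"
  shows "0 < emeasure lebesgue (ball c r)"
proof -
  have b: "ball c r \<in> sets lborel" by simp
  have "emeasure lebesgue (ball c r) = emeasure lborel (ball c r)"
    using emeasure_completion[of "ball c r" lborel] b main_part[OF b] by simp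
  also have "\<dots> = ennreal (unit_ball_vol (real DIM('a)) * r ^ DIM('a))"
    using r by (simp add: emeasure_ball)
  also have "\<dots> > 0" using r unit_ball_vol_pos[of "real DIM('a)"] by simp
  finally show ?thesis .
qed

context LL begin

lemma zero_on_open:
  fixes f :: "'a \<Rightarrow> real"
  assumes cont: "continuous_on \<Omega> f" and nn: "\<And>x. x \<in> \<Omega> \<Longrightarrow> 0 \<le> f x"
    and ae: "AE x in \<mu>. f x = 0" and x0: "x0 \<in> \<Omega>"
  shows "f x0 = 0"
proof (rule ccontr)
  assume "f x0 \<noteq> 0"
  then have pos: "0 < f x0" using nn[OF x0] by simp
  obtain d where d: "0 < d" "\<And>x. x \<in> \<Omega> \<Longrightarrow> dist x x0 < d \<Longrightarrow> dist (f x) (f x0) < f x0"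
    using cont x0 pos unfolding continuous_on_iff by metis
  obtain e where e: "0 < e" "ball x0 e \<subseteq> \<Omega>" using Om_open x0 open_contains_ball by blast
  define r where "r = min d e"
  have r: "0 < r" "ball x0 r \<subseteq> \<Omega>" using d(1) e unfolding r_def by auto
  have fp: "0 < f x" if "x \<in> ball x0 r" for x
  proof -
    have "x \<in> \<Omega>" "dist x x0 < d" using that r(2) unfolding r_def by (auto simp: dist_commute)
    then have "dist (f x) (f x0) < f x0" by (rule d(2))
    then show ?thesis by (simp add: dist_real_def)
  qed
  from ae obtain Nn where Nn: "{x \<in> space \<mu>. \<not> f x = 0} \<subseteq> Nn" "emeasure \<mu> Nn = 0" "Nn \<in> sets \<mu>"
    by (rule AE_E)
  have sub: "ball x0 r \<subseteq> Nn" using Nn(1) fp r(2) by fastforce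
  have bs: "ball x0 r \<in> sets \<mu>"
    using r(2) Om_leb by (simp add: sets_restrict_space_iff)
  have "emeasure \<mu> (ball x0 r) \<le> emeasure \<mu> Nn" by (rule emeasure_mono[OF sub Nn(3)])
  then have "emeasure \<mu> (ball x0 r) = 0" using Nn(2) by simp
  moreover have "emeasure \<mu> (ball x0 r) = emeasure lebesgue (ball x0 r)"
    by (rule emeasure_restrict_space) (use Om_leb r(2) in auto)
  ultimately show False using ball_pos_leb[OF r(1), of x0] by simp
qed

definition "Mx = Sup (J ` CC)"

lemma CC_ne: "Ec (\<lambda>_. 0) \<in> CC"
  unfolding CC_def
proof (intro CollectI conjI ballI)
  show "c_concave \<Omega> c (Ec (\<lambda>_. 0))" unfolding Ec_def by (rule c_concave_cc)
  fix x assume x: "x \<in> \<Omega>"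
  have "Ec (\<lambda>_. 0) x \<le> 0" unfolding Ec_def using cbar_ctrans_le[OF x, of c "\<lambda>_. 0"] by simp
  then show "Ec (\<lambda>_. 0) x \<noteq> \<infinity>" by auto
  have "0 \<le> ctrans \<Omega> c (\<lambda>_. 0) x" unfolding ctrans_def by (rule INF_greatest) (simp add: c_nonneg)
  also have "\<dots> - ereal (c x x) \<le> Ec (\<lambda>_. 0) x" unfolding Ec_def by (rule cbartrans_ge[OF x])
  finally show "Ec (\<lambda>_. 0) x \<noteq> -\<infinity>" using c_diag[of x] by auto
qed

lemma J_bdd: "bdd_above (J ` CC)"
  using J_bound by (auto intro!: bdd_aboveI)

lemma J_le_Mx: "p \<in> CC \<Longrightarrow> J p \<le> Mx"
  unfolding Mx_def by (rule cSup_upper[OF _ J_bdd]) simp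

lemma exists_max: obtains p where "p \<in> CC" "J p = Mx"
proof -
  have ne: "J ` CC \<noteq> {}" using CC_ne by blast
  have "\<exists>p\<in>CC. Mx - inverse (real (Suc n)) < J p" for n
  proof -
    have "Mx - inverse (real (Suc n)) < Mx" by simp
    then show ?thesis unfolding Mx_def less_cSup_iff[OF ne J_bdd] by simp
  qed
  then obtain ps where ps: "\<And>n. ps n \<in> CC" "\<And>n. Mx - inverse (real (Suc n)) < J (ps n)" by metis
  have bd: "\<bar>pr (ps n) x\<bar> \<le> Tb (Mx - 1)" if "x \<in> KK" for n x
  proof (rule J_coerc[OF ps(1) _ that])
    have "1 \<le> real (Suc n)" by simp
    then have "inverse (real (Suc n)) \<le> inverse 1" by (rule le_imp_inverse_le) simp
    then have "inverse (real (Suc n)) \<le> 1" by simp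
    then show "Mx - 1 \<le> J (ps n)" using ps(2)[of n] by linarith
  qed
  obtain r p where rp: "strict_mono r" "p \<in> CC" "(\<lambda>n. J (ps (r n))) \<longlonglongrightarrow> J p"
    by (rule comp[OF ps(1) bd]) blast
  have "(\<lambda>n. J (ps (r n))) \<longlonglongrightarrow> Mx"
  proof (rule tendsto_sandwich[of "\<lambda>n. Mx + - inverse (real (Suc n))" _ _ "\<lambda>_. Mx"])
    show "\<forall>\<^sub>F n in sequentially. Mx + - inverse (real (Suc n)) \<le> J (ps (r n))"
    proof (rule always_eventually, rule allI)
      fix n
      have "n \<le> r n" by (rule seq_suble[OF rp(1)])
      then have "inverse (real (Suc (r n))) \<le> inverse (real (Suc n))" by (simp add: le_imp_inverse_le)
      then show "Mx + - inverse (real (Suc n)) \<le> J (ps (r n))" using ps(2)[of "r n"] by linarith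
    qed
    show "\<forall>\<^sub>F n in sequentially. J (ps (r n)) \<le> Mx" by (simp add: J_le_Mx ps(1))
    show "(\<lambda>n. Mx + - inverse (real (Suc n))) \<longlonglongrightarrow> Mx" by (rule LIMSEQ_inverse_real_of_nat_add_minus)
  qed simp
  then have "J p = Mx" using rp(3) LIMSEQ_unique by blast
  then show ?thesis using that rp(2) by blast
qed

definition "SS = {p \<in> CC. J p = Mx}"

lemma int_pr: "p \<in> CC \<Longrightarrow> integrable \<mu> (pr p)"
  by (rule int_bdd[OF pr_meas]) (use pr_bdd Om_KK in auto)

lemma SS_bd: "p \<in> SS \<Longrightarrow> x \<in> KK \<Longrightarrow> \<bar>pr p x\<bar> \<le> Tb Mx"
  unfolding SS_def by (auto intro: J_coerc)

lemma exists_min: obtains p where "p \<in> SS" "\<And>p'. p' \<in> SS \<Longrightarrow> integral\<^sup>L \<mu> (pr p) \<le> integral\<^sup>L \<mu> (pr p')"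
proof -
  define IS where "IS = (\<lambda>p. integral\<^sup>L \<mu> (pr p)) ` SS"
  have ne: "IS \<noteq> {}" using exists_max unfolding IS_def SS_def by blast
  have bdd: "bdd_below IS"
  proof (rule bdd_belowI)
    fix v assume "v \<in> IS"
    then obtain p where p: "p \<in> SS" "v = integral\<^sup>L \<mu> (pr p)" unfolding IS_def by blast
    have pc: "p \<in> CC" using p(1) unfolding SS_def by simp
    have "integral\<^sup>L \<mu> (\<lambda>_. - Tb Mx) \<le> integral\<^sup>L \<mu> (pr p)"
    proof (rule integral_mono)
      show "integrable \<mu> (\<lambda>_. - Tb Mx)" by (rule int_bdd) auto
      show "integrable \<mu> (pr p)" by (rule int_pr[OF pc])
      fix x assume "x \<in> space \<mu>"
      then show "- Tb Mx \<le> pr p x" using SS_bd[OF p(1), of x] Om_KK by force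
    qed
    then show "integral\<^sup>L \<mu> (\<lambda>_. - Tb Mx) \<le> v" using p(2) by simp
  qed
  define I where "I = Inf IS"
  have "\<exists>p\<in>SS. integral\<^sup>L \<mu> (pr p) < I + inverse (real (Suc n))" for n
  proof -
    have "Inf IS < I + inverse (real (Suc n))" unfolding I_def[symmetric] by simp
    then obtain v where "v \<in> IS" "v < I + inverse (real (Suc n))" using cInf_less_iff[OF ne bdd] by blast
    then show ?thesis unfolding IS_def by blast
  qed
  then obtain ps where ps: "\<And>n. ps n \<in> SS" "\<And>n. integral\<^sup>L \<mu> (pr (ps n)) < I + inverse (real (Suc n))" by metis
  have psc: "ps n \<in> CC" for n using ps(1) unfolding SS_def by simp
  have Ile: "I \<le> integral\<^sup>L \<mu> (pr p)" if "p \<in> SS" for p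
    unfolding I_def by (rule cInf_lower[OF _ bdd]) (use that IS_def in auto)
  obtain r p where rp: "strict_mono r" "p \<in> CC" "(\<lambda>n. J (ps (r n))) \<longlonglongrightarrow> J p"
    "(\<lambda>n. integral\<^sup>L \<mu> (pr (ps (r n)))) \<longlonglongrightarrow> integral\<^sup>L \<mu> (pr p)"
    by (rule comp[OF psc SS_bd[OF ps(1)]]) blast
  have "(\<lambda>n. J (ps (r n))) \<longlonglongrightarrow> Mx" using ps(1) unfolding SS_def by simp
  then have Jp: "J p = Mx" using rp(3) LIMSEQ_unique by blast
  have "(\<lambda>n. integral\<^sup>L \<mu> (pr (ps (r n)))) \<longlonglongrightarrow> I"
  proof (rule tendsto_sandwich[of "\<lambda>_. I" _ _ "\<lambda>n. I + inverse (real (Suc n))"])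
    show "\<forall>\<^sub>F n in sequentially. I \<le> integral\<^sup>L \<mu> (pr (ps (r n)))" using Ile ps(1) by simp
    show "\<forall>\<^sub>F n in sequentially. integral\<^sup>L \<mu> (pr (ps (r n))) \<le> I + inverse (real (Suc n))"
    proof (rule always_eventually, rule allI)
      fix n
      have "n \<le> r n" by (rule seq_suble[OF rp(1)])
      then have "inverse (real (Suc (r n))) \<le> inverse (real (Suc n))" by (simp add: le_imp_inverse_le)
      then show "integral\<^sup>L \<mu> (pr (ps (r n))) \<le> I + inverse (real (Suc n))" using ps(2)[of "r n"] by linarith
    qed
    show "(\<lambda>n. I + inverse (real (Suc n))) \<longlonglongrightarrow> I" by (rule LIMSEQ_inverse_real_of_nat_add)
  qed simp
  then have Ip: "integral\<^sup>L \<mu> (pr p) = I" using rp(4) LIMSEQ_unique by blast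
  have pS: "p \<in> SS" unfolding SS_def using rp(2) Jp by simp
  show ?thesis using that[OF pS] Ile Ip by simp
qed

lemma minimal:
  assumes ph: "ph \<in> SS" and phmin: "\<And>p'. p' \<in> SS \<Longrightarrow> integral\<^sup>L \<mu> (pr ph) \<le> integral\<^sup>L \<mu> (pr p')"
    and pt: "pt \<in> SS" and x: "x \<in> \<Omega>"
  shows "ph x \<le> pt x"
proof -
  have phc: "ph \<in> CC" and ptc: "pt \<in> CC" and Jph: "J ph = Mx" and Jpt: "J pt = Mx"
    using ph pt unfolding SS_def by auto
  define q1 where "q1 = Ec (\<lambda>x. min (ph x) (pt x))"
  define q2 where "q2 = Ec (\<lambda>x. max (ph x) (pt x))"
  have q1: "q1 \<in> CC" and q2: "q2 \<in> CC" and Jq: "J ph + J pt \<le> J q1 + J q2"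
    and le1: "\<And>x. x \<in> \<Omega> \<Longrightarrow> pr q1 x \<le> pr ph x" and le2: "\<And>x. x \<in> \<Omega> \<Longrightarrow> pr q1 x \<le> pr pt x"
    using lat[OF phc ptc] unfolding q1_def q2_def by auto
  have "J q1 = Mx" using Jq Jph Jpt J_le_Mx[OF q1] J_le_Mx[OF q2] by linarith
  then have q1S: "q1 \<in> SS" unfolding SS_def using q1 by simp
  define f where "f x = pr ph x - pr q1 x" for x
  have fint: "integrable \<mu> f" unfolding f_def using int_pr[OF phc] int_pr[OF q1] by simp
  have fnn: "\<And>x. x \<in> \<Omega> \<Longrightarrow> 0 \<le> f x" unfolding f_def using le1 by simp
  have "integral\<^sup>L \<mu> f = integral\<^sup>L \<mu> (pr ph) - integral\<^sup>L \<mu> (pr q1)"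
    unfolding f_def using int_pr[OF phc] int_pr[OF q1] by simp
  also have "\<dots> \<le> 0" using phmin[OF q1S] by simp
  finally have "integral\<^sup>L \<mu> f \<le> 0" .
  moreover have "0 \<le> integral\<^sup>L \<mu> f" by (rule integral_nonneg_AE) (rule AE_I2, simp add: fnn)
  ultimately have "integral\<^sup>L \<mu> f = 0" by simp
  moreover have "AE x in \<mu>. 0 \<le> f x" by (rule AE_I2) (simp add: fnn)
  ultimately have ae: "AE x in \<mu>. f x = 0"
    using integral_nonneg_eq_0_iff_AE[OF fint] by blast
  have fc: "continuous_on \<Omega> f" unfolding f_def
    by (intro continuous_intros continuous_on_subset[OF pr_cont[OF phc] Om_KK] continuous_on_subset[OF pr_cont[OF q1] Om_KK])
  have "f x = 0" by (rule zero_on_open[OF fc fnn ae x])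
  then have "pr ph x \<le> pr pt x" using le2[OF x] unfolding f_def by simp
  then show ?thesis using cc_fin0[OF phc x] cc_fin0[OF ptc x] by simp
qed

lemma SS_Sigma: assumes p: "p \<in> SS" shows "p \<in> Sigma_max \<Omega> s c \<rho>"
proof -
  have pc: "p \<in> CC" and Jp: "J p = Mx" using p unfolding SS_def by auto
  have "Jstar \<Omega> s c q \<rho> \<le> Jstar \<Omega> s c p \<rho>" if q: "q \<in> Xstar \<Omega> s" "c_concave \<Omega> c q" for q
  proof -
    have "(\<forall>x\<in>\<Omega>. q x = \<infinity>) \<or> (\<forall>x\<in>\<Omega>. q x = -\<infinity>) \<or> q \<in> CC" by (rule tri[OF q(2)])
    then show ?thesis
    proof (elim disjE)
      assume "\<forall>x\<in>\<Omega>. q x = \<infinity>" then show ?thesis using pinf_not_Xstar q(1) by blast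
    next
      assume "\<forall>x\<in>\<Omega>. q x = -\<infinity>" then show ?thesis using Jstar_minf by simp
    next
      assume qc: "q \<in> CC" then show ?thesis using Jstar_cc[OF qc] Jstar_cc[OF pc] J_le_Mx[OF qc] Jp by simp
    qed
  qed
  then show ?thesis unfolding Sigma_max_def using cc_Xstar[OF pc] pc unfolding CC_def by blast
qed

lemma Sigma_SS: assumes p: "p \<in> Sigma_max \<Omega> s c \<rho>" and ph: "ph \<in> SS" shows "p \<in> SS"
proof -
  have px: "p \<in> Xstar \<Omega> s" and pcc: "c_concave \<Omega> c p"
    and le: "\<And>q. q \<in> Xstar \<Omega> s \<Longrightarrow> c_concave \<Omega> c q \<Longrightarrow> Jstar \<Omega> s c q \<rho> \<le> Jstar \<Omega> s c p \<rho>"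
    using p unfolding Sigma_max_def by auto
  have phc: "ph \<in> CC" and Jph: "J ph = Mx" using ph unfolding SS_def by auto
  have "ereal Mx \<le> Jstar \<Omega> s c p \<rho>"
    using le[OF cc_Xstar[OF phc]] phc Jstar_cc[OF phc] Jph unfolding CC_def by simp
  have "(\<forall>x\<in>\<Omega>. p x = \<infinity>) \<or> (\<forall>x\<in>\<Omega>. p x = -\<infinity>) \<or> p \<in> CC" by (rule tri[OF pcc])
  then show ?thesis
  proof (elim disjE)
    assume "\<forall>x\<in>\<Omega>. p x = \<infinity>" then show ?thesis using pinf_not_Xstar px by blast
  next
    assume "\<forall>x\<in>\<Omega>. p x = -\<infinity>" then show ?thesis using Jstar_minf \<open>ereal Mx \<le> _\<close> by simp
  next
    assume pc: "p \<in> CC"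
    then have "Mx \<le> J p" using Jstar_cc[OF pc] \<open>ereal Mx \<le> _\<close> by simp
    then show ?thesis unfolding SS_def using pc J_le_Mx[OF pc] by simp
  qed
qed

lemma main:
  "\<exists>pstar\<in>Sigma_max \<Omega> s c \<rho>.
     (\<forall>p\<in>Sigma_max \<Omega> s c \<rho>. \<forall>x\<in>\<Omega>. pstar x \<le> p x) \<and>
     (\<forall>q\<in>Sigma_max \<Omega> s c \<rho>.
        (\<forall>p\<in>Sigma_max \<Omega> s c \<rho>. \<forall>x\<in>\<Omega>. q x \<le> p x) \<longrightarrow> (\<forall>x\<in>\<Omega>. q x = pstar x))"
proof -
  obtain ph where ph: "ph \<in> SS" "\<And>p'. p' \<in> SS \<Longrightarrow> integral\<^sup>L \<mu> (pr ph) \<le> integral\<^sup>L \<mu> (pr p')"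
    using exists_min by blast
  have phS: "ph \<in> Sigma_max \<Omega> s c \<rho>" by (rule SS_Sigma[OF ph(1)])
  have minS: "\<forall>p\<in>Sigma_max \<Omega> s c \<rho>. \<forall>x\<in>\<Omega>. ph x \<le> p x"
    using minimal[OF ph] Sigma_SS[OF _ ph(1)] by blast
  show ?thesis
  proof (rule bexI[OF _ phS], intro conjI ballI impI)
    fix p x assume "p \<in> Sigma_max \<Omega> s c \<rho>" "x \<in> \<Omega>"
    then show "ph x \<le> p x" using minS by blast
  next
    fix q x assume q: "q \<in> Sigma_max \<Omega> s c \<rho>" and qm: "\<forall>p\<in>Sigma_max \<Omega> s c \<rho>. \<forall>x\<in>\<Omega>. q x \<le> p x"
      and x: "x \<in> \<Omega>"
    have "q x \<le> ph x" using qm phS x by blast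
    moreover have "ph x \<le> q x" using minS q x by blast
    ultimately show "q x = ph x" by simp
  qed
qed

end

theorem lemma4p5:
  fixes \<Omega> :: "'a::euclidean_space set"
    and s :: "real \<Rightarrow> 'a \<Rightarrow> ereal"
    and c :: "'a \<Rightarrow> 'a \<Rightarrow> real"
    and \<rho>bar :: "'a \<Rightarrow> real"
  assumes "bounded_smooth_domain \<Omega>"
    and "admissible_s \<Omega> s"
    and "admissible_cost c"
    and "\<rho>bar \<in> Xspace \<Omega> s"
    and "condN \<Omega> s \<rho>bar"
  shows "\<exists>pstar\<in>Sigma_max \<Omega> s c \<rho>bar.
           (\<forall>p\<in>Sigma_max \<Omega> s c \<rho>bar. \<forall>x\<in>\<Omega>. pstar x \<le> p x) \<and>
           (\<forall>q\<in>Sigma_max \<Omega> s c \<rho>bar.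
              (\<forall>p\<in>Sigma_max \<Omega> s c \<rho>bar. \<forall>x\<in>\<Omega>. q x \<le> p x) \<longrightarrow> (\<forall>x\<in>\<Omega>. q x = pstar x))"
proof -
  interpret LL \<Omega> s c \<rho>bar using assms by unfold_locales
  show ?thesis by (rule main)
qed

end
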